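(* Let $P$ be any poset on $\{1,2,\ldots,n\}$ and $k$ any field. Let $S=k[U_J]_{J\in\mathcal{J}_{\mathrm{conn}}(P)}$ be the polynomial ring with one variable for each nonempty connected order ideal of $P$, and let $\varphi:S\to R_P$ be the $k$-algebra map $U_J\mapsto \mathbf{x}^J:=\prod_{j\in J}x_j$. Then $\varphi$ is surjective, so $0\to I_P\to S\xrightarrow{\varphi} R_P\to 0$ is a presentation of $R_P$ with $I_P=\ker\varphi$, and this presentation is minimal; moreover $I_P$ has a minimal generating set indexed by $\Pi(P)$, consisting of the binomials $$\mathrm{syz}_{J_1,J_2}:=U_{J_1}U_{J_2}-U_{J_1\cup J_2}\cdot U_{J^{(1)}}U_{J^{(2)}}\cdots U_{J^{(t)}},\qquad \{J_1,J_2\}\in\Pi(P),$$ where $J^{(1)},\ldots,J^{(t)}$ are the connected components (i.e. the vertex sets of the connected components of the restricted Hasse diagram) of $J_1\cap J_2$.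
   Context: All posets are finite. A weak $P$-partition of a poset $P$ on $\{1,\ldots,n\}$ is a map $f:\{1,\ldots,n\}\to\mathbb{N}=\{0,1,2,\ldots\}$ with $f(i)\ge f(j)$ whenever $i<_P j$. $R_P$ is the subalgebra of $k[x_1,\ldots,x_n]$ spanned $k$-linearly by the monomials $\mathbf{x}^f=x_1^{f(1)}\cdots x_n^{f(n)}$ for $f$ a weak $P$-partition. An order ideal of $P$ is a subset $I$ with $p\le_P i\in I\Rightarrow p\in I$. A connected order ideal is a nonempty order ideal $J$ whose induced Hasse diagram (the Hasse diagram of $P$ restricted to $J$) is connected; $\mathcal{J}_{\mathrm{conn}}(P)$ is the set of these. Two connected order ideals intersect trivially if they are disjoint or nested (one contains the other), and nontrivially otherwise. $\Pi(P)$ is the set of unordered pairs $\{J_1,J_2\}$ of connected order ideals intersecting nontrivially. *)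

theory Defs
  imports Main "HOL-Library.Poly_Mapping"
begin

text \<open>Posets on {1..n} are given as relations r with partial_order_on {1..n} r.\<close>

type_synonym ('v, 'k) mpoly = "('v \<Rightarrow>\<^sub>0 nat) \<Rightarrow>\<^sub>0 'k"

definition strict_lt :: "nat rel \<Rightarrow> nat \<Rightarrow> nat \<Rightarrow> bool" where
  "strict_lt r i j \<longleftrightarrow> (i, j) \<in> r \<and> i \<noteq> j"

definition covers :: "nat rel \<Rightarrow> nat \<Rightarrow> nat \<Rightarrow> bool" where
  "covers r i j \<longleftrightarrow> strict_lt r i j \<and> \<not> (\<exists>k. strict_lt r i k \<and> strict_lt r k j)"

definition hasse_adj :: "nat rel \<Rightarrow> nat set \<Rightarrow> nat \<Rightarrow> nat \<Rightarrow> bool" where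
  "hasse_adj r J i j \<longleftrightarrow> i \<in> J \<and> j \<in> J \<and> (covers r i j \<or> covers r j i)"

definition hasse_conn :: "nat rel \<Rightarrow> nat set \<Rightarrow> nat \<Rightarrow> nat \<Rightarrow> bool" where
  "hasse_conn r J = (hasse_adj r J)\<^sup>*\<^sup>*"

definition hasse_components :: "nat rel \<Rightarrow> nat set \<Rightarrow> nat set set" where
  "hasse_components r J = {{y \<in> J. hasse_conn r J x y} | x. x \<in> J}"

definition order_ideal :: "nat \<Rightarrow> nat rel \<Rightarrow> nat set \<Rightarrow> bool" where
  "order_ideal n r I \<longleftrightarrow> I \<subseteq> {1..n} \<and> (\<forall>p i. i \<in> I \<and> (p, i) \<in> r \<longrightarrow> p \<in> I)"

definition conn_ideals :: "nat \<Rightarrow> nat rel \<Rightarrow> nat set set" where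
  "conn_ideals n r = {J. order_ideal n r J \<and> J \<noteq> {} \<and>
                         (\<forall>x\<in>J. \<forall>y\<in>J. hasse_conn r J x y)}"

definition intersect_nontrivially :: "nat set \<Rightarrow> nat set \<Rightarrow> bool" where
  "intersect_nontrivially A B \<longleftrightarrow> A \<inter> B \<noteq> {} \<and> \<not> A \<subseteq> B \<and> \<not> B \<subseteq> A"

definition Pi_pairs :: "nat \<Rightarrow> nat rel \<Rightarrow> nat set set set" where
  "Pi_pairs n r = {{J1, J2} | J1 J2. J1 \<in> conn_ideals n r \<and> J2 \<in> conn_ideals n r
                                      \<and> intersect_nontrivially J1 J2}"

definition weak_P_partition :: "nat \<Rightarrow> nat rel \<Rightarrow> (nat \<Rightarrow>\<^sub>0 nat) \<Rightarrow> bool" where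
  "weak_P_partition n r f \<longleftrightarrow> Poly_Mapping.keys f \<subseteq> {1..n} \<and>
     (\<forall>i j. strict_lt r i j \<longrightarrow> Poly_Mapping.lookup f i \<ge> Poly_Mapping.lookup f j)"

definition R_P :: "nat \<Rightarrow> nat rel \<Rightarrow> (nat, 'k::field) mpoly set" where
  "R_P n r = {(\<Sum>f\<in>F. Poly_Mapping.single f (c f)) | F c.
                finite F \<and> F \<subseteq> {f. weak_P_partition n r f}}"

text \<open>Polynomial ring S = k[U_J], J connected order ideal: polynomials in variables
  indexed by sets, involving only variables U_J with J in conn_ideals.\<close>
definition S_ring :: "nat \<Rightarrow> nat rel \<Rightarrow> (nat set, 'k::field) mpoly set" where
  "S_ring n r = {p. \<forall>m \<in> Poly_Mapping.keys p. Poly_Mapping.keys m \<subseteq> conn_ideals n r}"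

definition Uvar :: "nat set \<Rightarrow> (nat set, 'k::field) mpoly" where
  "Uvar J = Poly_Mapping.single (Poly_Mapping.single J 1) 1"

definition xmon :: "nat set \<Rightarrow> (nat, 'k::field) mpoly" where
  "xmon J = Poly_Mapping.single (\<Sum>j\<in>J. Poly_Mapping.single j 1) 1"

definition phi :: "(nat set, 'k::field) mpoly \<Rightarrow> (nat, 'k) mpoly" where
  "phi p = (\<Sum>m\<in>Poly_Mapping.keys p. Poly_Mapping.single 0 (Poly_Mapping.lookup p m) *
              (\<Prod>J\<in>Poly_Mapping.keys m. xmon J ^ Poly_Mapping.lookup m J))"

definition I_P :: "nat \<Rightarrow> nat rel \<Rightarrow> (nat set, 'k::field) mpoly set" where
  "I_P n r = {p \<in> S_ring n r. phi p = 0}"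

definition ideal_gen_S :: "nat \<Rightarrow> nat rel \<Rightarrow> (nat set, 'k::field) mpoly set \<Rightarrow> (nat set, 'k) mpoly set" where
  "ideal_gen_S n r G = {(\<Sum>g\<in>F. c g * g) | F c. finite F \<and> F \<subseteq> G \<and> (\<forall>g\<in>F. c g \<in> S_ring n r)}"

definition minimal_gen_set :: "nat \<Rightarrow> nat rel \<Rightarrow> (nat set, 'k::field) mpoly set \<Rightarrow> (nat set, 'k) mpoly set \<Rightarrow> bool" where
  "minimal_gen_set n r G I \<longleftrightarrow> G \<subseteq> I \<and> ideal_gen_S n r G = I \<and>
      (\<forall>G'. G' \<subset> G \<longrightarrow> ideal_gen_S n r G' \<noteq> I)"

definition syz :: "nat rel \<Rightarrow> nat set \<Rightarrow> nat set \<Rightarrow> (nat set, 'k::field) mpoly" where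
  "syz r J1 J2 = Uvar J1 * Uvar J2 -
      Uvar (J1 \<union> J2) * (\<Prod>C\<in>hasse_components r (J1 \<inter> J2). Uvar C)"

definition syz_pair :: "nat rel \<Rightarrow> nat set set \<Rightarrow> (nat set, 'k::field) mpoly" where
  "syz_pair r p = (SOME q. \<exists>J1 J2. p = {J1, J2} \<and> q = syz r J1 J2)"

text \<open>Minimality of the presentation: I_P \<subseteq> m^2, m the ideal generated by the
  variables U_J, i.e. no element of I_P has a term of total degree < 2.\<close>
definition total_deg :: "('v \<Rightarrow>\<^sub>0 nat) \<Rightarrow> nat" where
  "total_deg m = (\<Sum>v\<in>Poly_Mapping.keys m. Poly_Mapping.lookup m v)"

end

theory Submission
  imports Defs
begin



abbreviation sg where "sg \<equiv> Poly_Mapping.single"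
abbreviation lk where "lk \<equiv> Poly_Mapping.lookup"
abbreviation ks where "ks \<equiv> Poly_Mapping.keys"

definition xe :: "nat set \<Rightarrow> nat \<Rightarrow> (nat \<Rightarrow>\<^sub>0 nat)" where
  "xe J k = (\<Sum>j\<in>J. sg j k)"

lemma lk_xe: "lk (xe J k) i = (if finite J \<and> i \<in> J then k else 0)"
proof (cases "finite J")
  case True
  then show ?thesis
    by (simp add: xe_def lookup_sum lookup_single when_def sum.delta)
next
  case False
  then show ?thesis by (simp add: xe_def)
qed

definition ximg :: "(nat set \<Rightarrow>\<^sub>0 nat) \<Rightarrow> (nat \<Rightarrow>\<^sub>0 nat)" where
  "ximg m = (\<Sum>J\<in>ks m. xe J (lk m J))"

lemma xe_add: "xe J (a + b) = xe J a + xe J b"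
  by (simp add: xe_def single_add sum.distrib)

lemma xe_0[simp]: "xe J 0 = 0"
  by (simp add: xe_def)

lemma xmon_pow: "(xmon J :: (nat,'k::field) mpoly) ^ k = sg (xe J k) 1"
proof (induction k)
  case 0
  then show ?case by simp
next
  case (Suc k)
  have "xe J (Suc k) = xe J 1 + xe J k" using xe_add[of J 1 k] by simp
  then show ?case using Suc by (simp add: xmon_def mult_single xe_def)
qed

lemma prod_sg: "(\<Prod>x\<in>A. sg (f x) (1::'a::comm_semiring_1)) = sg (\<Sum>x\<in>A. f x) 1"
proof (cases "finite A")
  case True
  then show ?thesis by (induction A rule: finite_induct) (simp_all add: mult_single)
next
  case False
  then show ?thesis by simp
qed

lemma phi_alt: "phi p = (\<Sum>m\<in>ks p. sg (ximg m) (lk p m))"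
  unfolding phi_def
proof (rule sum.cong[OF refl])
  fix m
  have "(\<Prod>J\<in>ks m. (xmon J :: (nat,'a) mpoly) ^ lk m J) = (\<Prod>J\<in>ks m. sg (xe J (lk m J)) 1)"
    by (simp add: xmon_pow)
  also have "\<dots> = sg (ximg m) 1" by (simp add: prod_sg ximg_def)
  finally show "sg 0 (lk p m) * (\<Prod>J\<in>ks m. (xmon J :: (nat,'a) mpoly) ^ lk m J) = sg (ximg m) (lk p m)"
    by (simp add: mult_single)
qed

lemma phi_superset:
  assumes "finite A" "ks p \<subseteq> A"
  shows "phi p = (\<Sum>m\<in>A. sg (ximg m) (lk p m))"
  unfolding phi_alt
  by (rule sum.mono_neutral_left) (use assms in \<open>auto simp: in_keys_iff\<close>)

lemma phi_add: "phi (p + q) = phi p + phi q"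
proof -
  have f: "finite (ks p \<union> ks q)" by simp
  have "phi (p + q) = (\<Sum>m\<in>ks p \<union> ks q. sg (ximg m) (lk (p+q) m))"
    by (rule phi_superset[OF f]) (rule keys_add)
  also have "\<dots> = (\<Sum>m\<in>ks p \<union> ks q. sg (ximg m) (lk p m)) + (\<Sum>m\<in>ks p \<union> ks q. sg (ximg m) (lk q m))"
    by (simp add: lookup_add single_add sum.distrib)
  also have "\<dots> = phi p + phi q"
    using phi_superset[OF f, of p] phi_superset[OF f, of q] by simp
  finally show ?thesis .
qed

lemma phi_zero[simp]: "phi 0 = 0" by (simp add: phi_alt)

lemma phi_uminus: "phi (- p) = - phi p"
  by (simp add: phi_alt single_uminus sum_negf)

lemma phi_diff: "phi (p - q) = phi p - phi q"
  using phi_add[of p "-q"] by (simp add: phi_uminus)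

lemma phi_single: "phi (sg m c) = sg (ximg m) c"
  by (simp add: phi_alt)

lemma phi_sum: "phi (sum f A) = (\<Sum>x\<in>A. phi (f x))"
proof (cases "finite A")
  case True
  then show ?thesis by (induction A rule: finite_induct) (simp_all add: phi_add)
next
  case False
  then show ?thesis by simp
qed

lemma pm_expand: "p = (\<Sum>m\<in>ks p. sg m (lk p m))"
  by (rule poly_mapping_eqI)
     (simp add: lookup_sum lookup_single when_def sum.delta in_keys_iff)

lemma lk_ximg_superset:
  assumes "finite A" "ks m \<subseteq> A"
  shows "lk (ximg m) i = (\<Sum>J\<in>A. if finite J \<and> i \<in> J then lk m J else 0)"
proof -
  have "lk (ximg m) i = (\<Sum>J\<in>ks m. if finite J \<and> i \<in> J then lk m J else 0)"
    by (simp add: ximg_def lookup_sum lk_xe)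
  also have "\<dots> = (\<Sum>J\<in>A. if finite J \<and> i \<in> J then lk m J else 0)"
    by (rule sum.mono_neutral_left) (use assms in \<open>auto simp: in_keys_iff\<close>)
  finally show ?thesis .
qed

lemma lk_ximg: "lk (ximg m) i = (\<Sum>J\<in>ks m. if finite J \<and> i \<in> J then lk m J else 0)"
  by (rule lk_ximg_superset) auto

lemma ximg_add: "ximg (a + b) = ximg a + ximg b"
proof (rule poly_mapping_eqI)
  fix i
  have f: "finite (ks a \<union> ks b)" by simp
  show "lk (ximg (a + b)) i = lk (ximg a + ximg b) i"
    by (auto simp: lookup_add lk_ximg_superset[OF f keys_add] lk_ximg_superset[OF f]
        sum.distrib[symmetric] intro!: sum.cong)
qed

lemma ximg_0[simp]: "ximg 0 = 0" by (simp add: ximg_def)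

lemma ximg_single: "ximg (sg J k) = xe J k"
  by (simp add: ximg_def)

lemma phi_mult: "phi (p * q) = phi p * phi q"
proof -
  have "p * q = (\<Sum>a\<in>ks p. sg a (lk p a)) * (\<Sum>b\<in>ks q. sg b (lk q b))"
    using pm_expand[of p] pm_expand[of q] by simp
  also have "\<dots> = (\<Sum>a\<in>ks p. \<Sum>b\<in>ks q. sg (a + b) (lk p a * lk q b))"
    by (simp add: sum_product mult_single)
  finally have "phi (p * q) = (\<Sum>a\<in>ks p. \<Sum>b\<in>ks q. sg (ximg a + ximg b) (lk p a * lk q b))"
    by (simp add: phi_sum phi_single ximg_add)
  also have "\<dots> = (\<Sum>a\<in>ks p. sg (ximg a) (lk p a)) * (\<Sum>b\<in>ks q. sg (ximg b) (lk q b))"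
    by (simp add: sum_product mult_single)
  finally show ?thesis by (simp add: phi_alt)
qed




lemma S_add: "p \<in> S_ring n r \<Longrightarrow> q \<in> S_ring n r \<Longrightarrow> p + q \<in> S_ring n r"
  unfolding S_ring_def using keys_add by fastforce

lemma S_mult: assumes "p \<in> S_ring n r" "q \<in> S_ring n r" shows "p * q \<in> S_ring n r"
  unfolding S_ring_def
proof (intro CollectI ballI)
  fix m assume "m \<in> ks (p * q)"
  then obtain a b where "m = a + b" "a \<in> ks p" "b \<in> ks q" using keys_mult by blast
  then show "ks m \<subseteq> conn_ideals n r"
    using assms keys_add[of a b] unfolding S_ring_def by blast
qed

lemma S_single: "ks m \<subseteq> conn_ideals n r \<Longrightarrow> sg m c \<in> S_ring n r"
  unfolding S_ring_def by auto

lemma S_const: "sg 0 c \<in> S_ring n r"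
  by (rule S_single) simp

lemma S_zero: "0 \<in> S_ring n r"
  unfolding S_ring_def by simp

lemma S_uminus: "p \<in> S_ring n r \<Longrightarrow> - p \<in> S_ring n r"
  unfolding S_ring_def by (simp add: keys_minus)

lemma S_sum: "(\<And>x. x \<in> A \<Longrightarrow> f x \<in> S_ring n r) \<Longrightarrow> sum f A \<in> S_ring n r"
proof (induction A rule: infinite_finite_induct)
  case (infinite A) then show ?case by (simp add: S_zero)
next
  case empty then show ?case by (simp add: S_zero)
next
  case (insert x F) then show ?case by (simp add: S_add)
qed

lemma IG_zero: "0 \<in> ideal_gen_S n r G"
  unfolding ideal_gen_S_def by (rule CollectI, rule exI[of _ "{}"]) auto

lemma IG_gen: "g \<in> G \<Longrightarrow> g \<in> ideal_gen_S n r G"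
  unfolding ideal_gen_S_def
  apply (rule CollectI, rule exI[of _ "{g}"], rule exI[of _ "\<lambda>_. 1"])
  using S_const[where c=1 and n=n and r=r] by simp

lemma IG_add:
  assumes "a \<in> ideal_gen_S n r G" "b \<in> ideal_gen_S n r G"
  shows "a + b \<in> ideal_gen_S n r G"
proof -
  obtain F1 c1 where 1: "a = (\<Sum>g\<in>F1. c1 g * g)" "finite F1" "F1 \<subseteq> G" "\<forall>g\<in>F1. c1 g \<in> S_ring n r"
    using assms(1) unfolding ideal_gen_S_def by blast
  obtain F2 c2 where 2: "b = (\<Sum>g\<in>F2. c2 g * g)" "finite F2" "F2 \<subseteq> G" "\<forall>g\<in>F2. c2 g \<in> S_ring n r"
    using assms(2) unfolding ideal_gen_S_def by blast
  define c where "c g = (if g \<in> F1 then c1 g else 0) + (if g \<in> F2 then c2 g else 0)" for g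
  have f: "finite (F1 \<union> F2)" using 1 2 by simp
  have e1: "(\<Sum>g\<in>F1 \<union> F2. (if g \<in> F1 then c1 g else 0) * g) = a"
    unfolding 1 by (rule sum.mono_neutral_cong_right[OF f]) auto
  have e2: "(\<Sum>g\<in>F1 \<union> F2. (if g \<in> F2 then c2 g else 0) * g) = b"
    unfolding 2 by (rule sum.mono_neutral_cong_right[OF f]) auto
  have "a + b = (\<Sum>g\<in>F1 \<union> F2. c g * g)"
    unfolding c_def distrib_right sum.distrib e1 e2 ..
  moreover have "\<forall>g\<in>F1 \<union> F2. c g \<in> S_ring n r"
    using 1 2 by (auto simp: c_def S_add S_zero)
  ultimately show ?thesis unfolding ideal_gen_S_def using f 1 2
    by (intro CollectI exI[of _ "F1 \<union> F2"] exI[of _ c]) auto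
qed

lemma IG_mult:
  assumes "s \<in> S_ring n r" "a \<in> ideal_gen_S n r G"
  shows "s * a \<in> ideal_gen_S n r G"
proof -
  obtain F c where 1: "a = (\<Sum>g\<in>F. c g * g)" "finite F" "F \<subseteq> G" "\<forall>g\<in>F. c g \<in> S_ring n r"
    using assms(2) unfolding ideal_gen_S_def by blast
  have "s * a = (\<Sum>g\<in>F. (s * c g) * g)"
    unfolding 1 by (simp add: sum_distrib_left mult.assoc)
  moreover have "\<forall>g\<in>F. s * c g \<in> S_ring n r" using 1 assms(1) S_mult by blast
  ultimately have "\<exists>F' c'. s * a = (\<Sum>g\<in>F'. c' g * g) \<and> finite F' \<and> F' \<subseteq> G \<and> (\<forall>g\<in>F'. c' g \<in> S_ring n r)"
    using 1(2,3) by (intro exI[of _ F] exI[of _ "\<lambda>g. s * c g"]) simp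
  then show ?thesis unfolding ideal_gen_S_def by blast
qed

lemma IG_diff:
  assumes "a \<in> ideal_gen_S n r G" "b \<in> ideal_gen_S n r G"
  shows "a - b \<in> ideal_gen_S n r (G :: (nat set, 'k::field) mpoly set)"
proof -
  have m1: "(sg 0 (-1) :: (nat set, 'k) mpoly) = - 1"
    by (simp only: single_uminus single_one)
  have "- b = (sg 0 (-1) :: (nat set, 'k) mpoly) * b"
    by (simp only: m1 mult_minus1)
  also have "\<dots> \<in> ideal_gen_S n r G" by (rule IG_mult[OF S_const assms(2)])
  finally have "- b \<in> ideal_gen_S n r G" .
  from IG_add[OF assms(1) this] show ?thesis by (simp only: diff_conv_add_uminus)
qed

lemma IG_sum:
  "(\<And>x. x \<in> A \<Longrightarrow> f x \<in> ideal_gen_S n r G) \<Longrightarrow> sum f A \<in> ideal_gen_S n r G"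
proof (induction A rule: infinite_finite_induct)
  case (infinite A) then show ?case by (simp add: IG_zero)
next
  case empty then show ?case by (simp add: IG_zero)
next
  case (insert x F) then show ?case by (simp add: IG_add)
qed

lemma IG_subset_IP:
  assumes "G \<subseteq> I_P n r"
  shows "ideal_gen_S n r G \<subseteq> (I_P n r :: (nat set, 'k::field) mpoly set)"
proof
  fix p :: "(nat set, 'k) mpoly" assume "p \<in> ideal_gen_S n r G"
  then obtain F c where 1: "p = (\<Sum>g\<in>F. c g * g)" "finite F" "F \<subseteq> G" "\<forall>g\<in>F. c g \<in> S_ring n r"
    unfolding ideal_gen_S_def by blast
  have "p \<in> S_ring n r" unfolding 1
    using 1 assms by (intro S_sum S_mult) (auto simp: I_P_def)
  moreover have "phi p = 0" unfolding 1 phi_sum phi_mult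
    using 1 assms by (intro sum.neutral) (auto simp: I_P_def)
  ultimately show "p \<in> I_P n r" by (simp add: I_P_def)
qed




lemma hasse_adj_sym: "hasse_adj r T x y = hasse_adj r T y x"
  unfolding hasse_adj_def by blast

lemma hasse_conn_sym: "hasse_conn r T x y \<Longrightarrow> hasse_conn r T y x"
  unfolding hasse_conn_def
proof (induction rule: rtranclp_induct)
  case base then show ?case by simp
next
  case (step y z)
  then show ?case using hasse_adj_sym by (metis converse_rtranclp_into_rtranclp)
qed

lemma hasse_conn_trans: "hasse_conn r T x y \<Longrightarrow> hasse_conn r T y z \<Longrightarrow> hasse_conn r T x z"
  unfolding hasse_conn_def by (rule rtranclp_trans)

lemma hasse_conn_refl: "hasse_conn r T x x"
  unfolding hasse_conn_def by simp

lemma hasse_conn_mono: "T \<subseteq> T' \<Longrightarrow> hasse_conn r T x y \<Longrightarrow> hasse_conn r T' x y"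
  unfolding hasse_conn_def
  by (erule rtranclp_mono[THEN predicate2D, rotated]) (auto simp: hasse_adj_def)

lemma hasse_conn_adj: "hasse_adj r T x y \<Longrightarrow> hasse_conn r T x y"
  unfolding hasse_conn_def by simp

lemma hasse_conn_in: "hasse_conn r T x y \<Longrightarrow> x \<in> T \<Longrightarrow> y \<in> T"
  unfolding hasse_conn_def
  by (induction rule: rtranclp_induct) (auto simp: hasse_adj_def)

definition hcomp :: "nat rel \<Rightarrow> nat set \<Rightarrow> nat \<Rightarrow> nat set" where
  "hcomp r T x = {y \<in> T. hasse_conn r T x y}"

lemma comp_self: "x \<in> T \<Longrightarrow> x \<in> hcomp r T x"
  by (simp add: hcomp_def hasse_conn_refl)

lemma comp_eq: "i \<in> hcomp r T x \<Longrightarrow> hcomp r T i = hcomp r T x"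
  unfolding hcomp_def using hasse_conn_sym hasse_conn_trans by blast

lemma hasse_components_comp: "hasse_components r T = hcomp r T ` T"
  unfolding hasse_components_def hcomp_def by auto

lemma components_sub: "C \<in> hasse_components r T \<Longrightarrow> C \<subseteq> T"
  unfolding hasse_components_comp hcomp_def by auto

lemma components_finite: "finite T \<Longrightarrow> finite (hasse_components r T)"
  unfolding hasse_components_comp by simp

lemma components_unique: "C \<in> hasse_components r T \<Longrightarrow> i \<in> C \<Longrightarrow> C = hcomp r T i"
  unfolding hasse_components_comp using comp_eq by blast

lemma components_count:
  assumes "finite T"
  shows "(\<Sum>C\<in>hasse_components r T. if i \<in> C then (k::nat) else 0) = (if i \<in> T then k else 0)"
proof (cases "i \<in> T")
  case True
  have "(\<Sum>C\<in>hasse_components r T. if i \<in> C then k else 0) = (\<Sum>C\<in>{hcomp r T i}. if i \<in> C then k else 0)"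
  proof (rule sum.mono_neutral_right)
    show "finite (hasse_components r T)" using assms by (rule components_finite)
    show "{hcomp r T i} \<subseteq> hasse_components r T" using True by (simp add: hasse_components_comp)
    show "\<forall>C\<in>hasse_components r T - {hcomp r T i}. (if i \<in> C then k else 0) = 0"
    proof
      fix C assume "C \<in> hasse_components r T - {hcomp r T i}"
      then have "C \<in> hasse_components r T" "C \<noteq> hcomp r T i" by auto
      then have "i \<notin> C" using components_unique by blast
      then show "(if i \<in> C then k else 0) = 0" by simp
    qed
  qed
  then show ?thesis using True comp_self by simp
next
  case False
  then show ?thesis using components_sub by (fastforce intro!: sum.neutral)
qed

lemma comp_internal:
  assumes "hasse_conn r T x y"
  shows "hasse_conn r (hcomp r T x) x y"
  using assms unfolding hasse_conn_def
proof (induction rule: rtranclp_induct)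
  case base then show ?case by simp
next
  case (step y z)
  have "hasse_conn r T x y" "hasse_conn r T x z"
    using step unfolding hasse_conn_def by auto
  then have "hasse_adj r (hcomp r T x) y z"
    using step(2) unfolding hasse_adj_def hcomp_def by auto
  then show ?case using step(3) by (rule rtranclp.rtrancl_into_rtrancl[rotated])
qed

lemma comp_connected:
  assumes "y \<in> hcomp r T x" "z \<in> hcomp r T x"
  shows "hasse_conn r (hcomp r T x) y z"
proof -
  have "hasse_conn r (hcomp r T x) x y" "hasse_conn r (hcomp r T x) x z"
    using assms comp_internal unfolding hcomp_def by auto
  then show ?thesis using hasse_conn_sym hasse_conn_trans by blast
qed

context
  fixes n :: nat and r :: "nat rel"
  assumes po: "partial_order_on {1..n} r"
begin

lemma r_sub: "(a, b) \<in> r \<Longrightarrow> a \<in> {1..n} \<and> b \<in> {1..n}"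
  using po unfolding partial_order_on_def preorder_on_def by blast

lemma r_refl: "a \<in> {1..n} \<Longrightarrow> (a, a) \<in> r"
  using po unfolding partial_order_on_def preorder_on_def refl_on_def by blast

lemma r_trans: "(a, b) \<in> r \<Longrightarrow> (b, c) \<in> r \<Longrightarrow> (a, c) \<in> r"
  using po unfolding partial_order_on_def preorder_on_def trans_def by blast

lemma r_antisym: "(a, b) \<in> r \<Longrightarrow> (b, a) \<in> r \<Longrightarrow> a = b"
  using po unfolding partial_order_on_def antisym_def by blast

lemma chain_lemma:
  assumes "strict_lt r p i" "\<And>c. (p, c) \<in> r \<Longrightarrow> (c, i) \<in> r \<Longrightarrow> c \<in> T"
  shows "hasse_conn r T p i"
proof -
  define B where "B p i = {c. strict_lt r p c \<and> strict_lt r c i}" for p i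
  have finB: "finite (B p i)" for p i
    by (rule finite_subset[of _ "{1..n}"]) (auto simp: B_def strict_lt_def dest: r_sub)
  have "\<forall>p i. card (B p i) = N \<longrightarrow> strict_lt r p i \<longrightarrow>
          (\<forall>c. (p, c) \<in> r \<longrightarrow> (c, i) \<in> r \<longrightarrow> c \<in> T) \<longrightarrow> hasse_conn r T p i" for N
  proof (induction N rule: less_induct)
    case (less N)
    show ?case
    proof (intro allI impI)
      fix p i assume N: "card (B p i) = N" and lt: "strict_lt r p i"
        and T: "\<forall>c. (p, c) \<in> r \<longrightarrow> (c, i) \<in> r \<longrightarrow> c \<in> T"
      have pT: "p \<in> T" "i \<in> T" using T lt r_sub r_refl unfolding strict_lt_def by blast+
      show "hasse_conn r T p i"
      proof (cases "B p i = {}")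
        case True
        then have "covers r p i" using lt unfolding covers_def B_def by blast
        then show ?thesis using pT by (intro hasse_conn_adj) (simp add: hasse_adj_def)
      next
        case False
        then obtain k where k: "strict_lt r p k" "strict_lt r k i" unfolding B_def by blast
        have sub1: "B p k \<subset> B p i"
        proof
          show "B p k \<subseteq> B p i" using k unfolding B_def strict_lt_def
            using r_trans r_antisym by blast
          show "B p k \<noteq> B p i" using k unfolding B_def by (auto simp: strict_lt_def)
        qed
        have sub2: "B k i \<subset> B p i"
        proof
          show "B k i \<subseteq> B p i" using k unfolding B_def strict_lt_def
            using r_trans r_antisym by blast
          show "B k i \<noteq> B p i" using k unfolding B_def by (auto simp: strict_lt_def)
        qed
        have c1: "card (B p k) < N" using N psubset_card_mono[OF finB sub1] by simp
        have c2: "card (B k i) < N" using N psubset_card_mono[OF finB sub2] by simp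
        have h1: "hasse_conn r T p k"
          using less[OF c1] k T r_trans unfolding strict_lt_def by blast
        have h2: "hasse_conn r T k i"
          using less[OF c2] k T r_trans unfolding strict_lt_def by blast
        show ?thesis using h1 h2 by (rule hasse_conn_trans)
      qed
    qed
  qed
  then show ?thesis using assms by blast
qed

lemma ideal_comp_conn:
  assumes "order_ideal n r T" "x \<in> T"
  shows "hcomp r T x \<in> conn_ideals n r"
proof -
  have "order_ideal n r (hcomp r T x)"
    unfolding order_ideal_def
  proof (intro conjI allI impI)
    show "hcomp r T x \<subseteq> {1..n}" using assms unfolding hcomp_def order_ideal_def by auto
    fix p i assume a: "i \<in> hcomp r T x \<and> (p, i) \<in> r"
    then have iT: "i \<in> T" "hasse_conn r T x i" unfolding hcomp_def by auto
    have pT: "p \<in> T" using assms a iT unfolding order_ideal_def by blast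
    show "p \<in> hcomp r T x"
    proof (cases "p = i")
      case True then show ?thesis using a by simp
    next
      case False
      then have "hasse_conn r T p i"
        using a assms(1) iT(1) unfolding order_ideal_def
        by (intro chain_lemma) (auto simp: strict_lt_def)
      then have "hasse_conn r T x p"
        using iT hasse_conn_sym hasse_conn_trans by blast
      then show ?thesis using pT by (simp add: hcomp_def)
    qed
  qed
  moreover have "hcomp r T x \<noteq> {}" using comp_self assms by fast
  ultimately show ?thesis unfolding conn_ideals_def using comp_connected by blast
qed

lemma components_conn:
  assumes "order_ideal n r T" "C \<in> hasse_components r T"
  shows "C \<in> conn_ideals n r"
  using assms ideal_comp_conn unfolding hasse_components_comp by blast

lemma ideal_inter: "order_ideal n r A \<Longrightarrow> order_ideal n r B \<Longrightarrow> order_ideal n r (A \<inter> B)"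
  unfolding order_ideal_def by blast

lemma conn_union:
  assumes "A \<in> conn_ideals n r" "B \<in> conn_ideals n r" "A \<inter> B \<noteq> {}"
  shows "A \<union> B \<in> conn_ideals n r"
proof -
  obtain x where x: "x \<in> A" "x \<in> B" using assms(3) by blast
  have cA: "hasse_conn r (A \<union> B) y z" if "y \<in> A" "z \<in> A" for y z
    using assms(1) that hasse_conn_mono[of A "A \<union> B"] unfolding conn_ideals_def by blast
  have cB: "hasse_conn r (A \<union> B) y z" if "y \<in> B" "z \<in> B" for y z
    using assms(2) that hasse_conn_mono[of B "A \<union> B"] unfolding conn_ideals_def by blast
  have "hasse_conn r (A \<union> B) y z" if "y \<in> A \<union> B" "z \<in> A \<union> B" for y z
    using that cA cB x hasse_conn_trans by blast
  moreover have "order_ideal n r A" "order_ideal n r B" using assms unfolding conn_ideals_def by auto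
  then have "order_ideal n r (A \<union> B)" unfolding order_ideal_def by blast
  moreover have "A \<union> B \<noteq> {}" using x by blast
  ultimately show ?thesis unfolding conn_ideals_def by blast
qed

lemma conn_finite: "J \<in> conn_ideals n r \<Longrightarrow> finite J"
proof -
  assume "J \<in> conn_ideals n r"
  then have "J \<subseteq> {1..n}" unfolding conn_ideals_def order_ideal_def by simp
  then show "finite J" using finite_subset by blast
qed

end




definition mon2 :: "nat set \<Rightarrow> nat set \<Rightarrow> (nat set \<Rightarrow>\<^sub>0 nat)" where
  "mon2 A B = sg A 1 + sg B 1"

definition M2 :: "nat rel \<Rightarrow> nat set \<Rightarrow> nat set \<Rightarrow> (nat set \<Rightarrow>\<^sub>0 nat)" where
  "M2 r A B = sg (A \<union> B) 1 + (\<Sum>C\<in>hasse_components r (A \<inter> B). sg C 1)"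

lemma syz_alt: "(syz r A B :: (nat set, 'k::field) mpoly) = sg (mon2 A B) 1 - sg (M2 r A B) 1"
  unfolding syz_def Uvar_def mon2_def M2_def
  by (simp add: mult_single prod_sg)

lemma syz_sym: "syz r A B = syz r B A"
  unfolding syz_def by (simp add: Un_commute Int_commute mult.commute)

lemma syz_pair_eq: "syz_pair r {A, B} = syz r A B"
  unfolding syz_pair_def
proof (rule someI2[where a = "syz r A B"])
  show "\<exists>J1 J2. {A, B} = {J1, J2} \<and> syz r A B = syz r J1 J2" by blast
next
  fix q assume "\<exists>J1 J2. {A, B} = {J1, J2} \<and> q = syz r J1 J2"
  then obtain J1 J2 where "{A, B} = {J1, J2}" "q = syz r J1 J2" by blast
  then show "q = syz r A B" using syz_sym by (auto simp: doubleton_eq_iff)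
qed

lemma ximg_sum: "ximg (sum f A) = (\<Sum>x\<in>A. ximg (f x))"
proof (induction A rule: infinite_finite_induct)
  case (insert x F) then show ?case by (simp add: ximg_add)
qed simp_all

lemma lk_ximg_mon2:
  assumes "finite A" "finite B"
  shows "lk (ximg (mon2 A B)) i = (if i \<in> A then 1 else 0) + (if i \<in> B then 1 else 0)"
  using assms by (simp add: mon2_def ximg_add ximg_single lookup_add lk_xe)

lemma lk_ximg_M2:
  assumes "finite A" "finite B"
  shows "lk (ximg (M2 r A B)) i = (if i \<in> A \<union> B then 1 else 0) + (if i \<in> A \<inter> B then 1 else 0)"
proof -
  have fin: "finite (A \<inter> B)" using assms by simp
  have "lk (ximg (\<Sum>C\<in>hasse_components r (A \<inter> B). sg C 1)) i
      = (\<Sum>C\<in>hasse_components r (A \<inter> B). if finite C \<and> i \<in> C then 1 else 0)"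
    by (simp only: ximg_sum ximg_single lookup_sum lk_xe)
  also have "\<dots> = (\<Sum>C\<in>hasse_components r (A \<inter> B). if i \<in> C then 1 else 0)"
  proof (rule sum.cong[OF refl])
    fix C assume "C \<in> hasse_components r (A \<inter> B)"
    then have "C \<subseteq> A \<inter> B" by (rule components_sub)
    then have "finite C" using fin by (rule finite_subset)
    then show "(if finite C \<and> i \<in> C then 1 else 0) = (if i \<in> C then (1::nat) else 0)" by simp
  qed
  also have "\<dots> = (if i \<in> A \<inter> B then 1 else 0)" by (rule components_count[OF fin])
  finally have e: "lk (ximg (\<Sum>C\<in>hasse_components r (A \<inter> B). sg C 1)) i = (if i \<in> A \<inter> B then 1 else 0)" .
  have "lk (ximg (M2 r A B)) i = lk (xe (A \<union> B) 1) i + lk (ximg (\<Sum>C\<in>hasse_components r (A \<inter> B). sg C 1)) i"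
    by (simp only: M2_def ximg_add ximg_single lookup_add)
  also have "\<dots> = (if i \<in> A \<union> B then 1 else 0) + (if i \<in> A \<inter> B then 1 else 0)"
    unfolding e lk_xe using assms by simp
  finally show ?thesis .
qed

lemma ximg_M2: "finite A \<Longrightarrow> finite B \<Longrightarrow> ximg (M2 r A B) = ximg (mon2 A B)"
  by (rule poly_mapping_eqI) (simp add: lk_ximg_M2 lk_ximg_mon2)

lemma keys_mon2: "ks (mon2 A B) \<subseteq> {A, B}"
  unfolding mon2_def using keys_add[of "sg A 1" "sg B (1::nat)"] by auto

lemma keys_M2: "ks (M2 r A B) \<subseteq> insert (A \<union> B) (hasse_components r (A \<inter> B))"
proof -
  have "ks (\<Sum>C\<in>hasse_components r (A \<inter> B). sg C (1::nat)) \<subseteq> hasse_components r (A \<inter> B)"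
    using keys_sum[of "\<lambda>C. sg C (1::nat)" "hasse_components r (A \<inter> B)"] by auto
  moreover have "ks (sg (A \<union> B) (1::nat)) \<subseteq> {A \<union> B}" by simp
  ultimately show ?thesis unfolding M2_def
    using keys_add[of "sg (A \<union> B) (1::nat)" "(\<Sum>C\<in>hasse_components r (A \<inter> B). sg C (1::nat))"] by blast
qed

lemma S_diff: "p \<in> S_ring n r \<Longrightarrow> q \<in> S_ring n r \<Longrightarrow> p - q \<in> S_ring n r"
proof -
  assume "p \<in> S_ring n r" "q \<in> S_ring n r"
  then have "p + - q \<in> S_ring n r" using S_add S_uminus by blast
  then show ?thesis by (simp only: diff_conv_add_uminus)
qed

lemma syz_in_IP:
  assumes po: "partial_order_on {1..n} r"
    and A: "A \<in> conn_ideals n r" and B: "B \<in> conn_ideals n r" and nt: "intersect_nontrivially A B"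
  shows "(syz r A B :: (nat set, 'k::field) mpoly) \<in> I_P n r"
proof -
  have fA: "finite A" and fB: "finite B" using A B conn_finite[OF po] by auto
  have "ks (mon2 A B) \<subseteq> conn_ideals n r" using keys_mon2 A B by blast
  moreover have "ks (M2 r A B) \<subseteq> conn_ideals n r"
  proof -
    have "A \<union> B \<in> conn_ideals n r" using conn_union[OF po A B] nt
      unfolding intersect_nontrivially_def by blast
    moreover have "hasse_components r (A \<inter> B) \<subseteq> conn_ideals n r"
      using components_conn[OF po] ideal_inter[OF po] A B unfolding conn_ideals_def by blast
    ultimately show ?thesis using keys_M2 by blast
  qed
  ultimately have "(syz r A B :: (nat set, 'k::field) mpoly) \<in> S_ring n r"
    unfolding syz_alt by (intro S_diff S_single)
  moreover have "phi (syz r A B :: (nat set, 'k::field) mpoly) = 0"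
    unfolding syz_alt phi_diff phi_single using ximg_M2[OF fA fB] by simp
  ultimately show ?thesis by (simp add: I_P_def)
qed




definition laminar :: "(nat set \<Rightarrow>\<^sub>0 nat) \<Rightarrow> bool" where
  "laminar m \<longleftrightarrow> (\<forall>J\<in>ks m. \<forall>K\<in>ks m. \<not> intersect_nontrivially J K)"

definition mu :: "(nat set \<Rightarrow>\<^sub>0 nat) \<Rightarrow> nat" where
  "mu m = (\<Sum>J\<in>ks m. lk m J * 2 ^ card J)"

definition sz :: "nat \<Rightarrow> (nat \<Rightarrow>\<^sub>0 nat) \<Rightarrow> nat" where
  "sz n f = (\<Sum>i\<in>{1..n}. lk f i)"

lemma sz_add: "sz n (a + b) = sz n a + sz n b"
  by (simp add: sz_def lookup_add sum.distrib)

lemma sz_xe: "D \<subseteq> {1..n} \<Longrightarrow> sz n (xe D 1) = card D"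
proof -
  assume D: "D \<subseteq> {1..n}"
  then have fD: "finite D" using finite_subset by blast
  have "sz n (xe D 1) = (\<Sum>i\<in>{1..n}. if i \<in> D then 1 else 0)"
    unfolding sz_def lk_xe using fD by simp
  also have "\<dots> = card ({1..n} \<inter> D)" by (simp add: sum.If_cases)
  also have "{1..n} \<inter> D = D" using D by blast
  finally show ?thesis .
qed

lemma mu_superset: "finite A \<Longrightarrow> ks m \<subseteq> A \<Longrightarrow> mu m = (\<Sum>J\<in>A. lk m J * 2 ^ card J)"
  unfolding mu_def by (rule sum.mono_neutral_left) (auto simp: in_keys_iff)

lemma mu_add: "mu (a + b) = mu a + mu b"
proof -
  have f: "finite (ks a \<union> ks b)" by simp
  show ?thesis
    unfolding mu_superset[OF f keys_add] mu_superset[OF f Un_upper1] mu_superset[OF f Un_upper2]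
    by (simp add: lookup_add sum.distrib algebra_simps)
qed

lemma mu_single: "mu (sg J k) = k * 2 ^ card J"
  by (simp add: mu_def)

lemma mu_sum: "mu (sum f A) = (\<Sum>x\<in>A. mu (f x))"
proof (induction A rule: infinite_finite_induct)
  case (infinite A) then show ?case by (simp add: mu_def)
next
  case empty then show ?case by (simp add: mu_def)
next
  case (insert x F) then show ?case by (simp add: mu_add)
qed

lemma lk_ximg_ge:
  assumes "J \<in> ks m" "finite J" "i \<in> J"
  shows "lk m J \<le> lk (ximg m) i"
proof -
  have "lk m J = (if finite J \<and> i \<in> J then lk m J else 0)" using assms by simp
  also have "\<dots> \<le> (\<Sum>J\<in>ks m. if finite J \<and> i \<in> J then lk m J else 0)"
    by (rule member_le_sum) (use assms in auto)
  finally show ?thesis by (simp add: lk_ximg)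
qed

lemma lk_ximg_pos:
  assumes "lk (ximg m) i \<noteq> 0"
  shows "\<exists>J\<in>ks m. i \<in> J"
proof (rule ccontr)
  assume "\<not> ?thesis"
  then have "(\<Sum>J\<in>ks m. if finite J \<and> i \<in> J then lk m J else 0) = 0"
    by (intro sum.neutral) auto
  then show False using assms by (simp add: lk_ximg)
qed

lemma ximg_eq_zero:
  assumes "ximg m = 0" "\<forall>J\<in>ks m. finite J \<and> J \<noteq> {}"
  shows "m = 0"
proof (rule ccontr)
  assume "m \<noteq> 0"
  then obtain J where J: "J \<in> ks m" by (metis keys_eq_empty ex_in_conv)
  then obtain i where "i \<in> J" "finite J" using assms by blast
  then have "lk m J \<le> lk (ximg m) i" using lk_ximg_ge J by blast
  then show False using J assms(1) by (simp add: in_keys_iff)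
qed

context
  fixes n :: nat and r :: "nat rel"
  assumes po: "partial_order_on {1..n} r"
begin

lemma CI_props:
  assumes "J \<in> conn_ideals n r"
  shows "finite J" "J \<noteq> {}" "J \<subseteq> {1..n}" "order_ideal n r J"
    "\<And>x y. x \<in> J \<Longrightarrow> y \<in> J \<Longrightarrow> hasse_conn r J x y"
  using assms conn_finite[OF po assms] unfolding conn_ideals_def order_ideal_def by auto

lemma ximg_keys:
  assumes "ks m \<subseteq> conn_ideals n r"
  shows "ks (ximg m) \<subseteq> {1..n}"
proof
  fix i assume "i \<in> ks (ximg m)"
  then have "lk (ximg m) i \<noteq> 0" by (simp add: in_keys_iff)
  then obtain J where "J \<in> ks m" "i \<in> J" using lk_ximg_pos by blast
  then show "i \<in> {1..n}" using assms CI_props(3) by blast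
qed

lemma ximg_weak:
  assumes "ks m \<subseteq> conn_ideals n r"
  shows "weak_P_partition n r (ximg m)"
  unfolding weak_P_partition_def
proof (intro conjI allI impI)
  show "ks (ximg m) \<subseteq> {1..n}" using ximg_keys[OF assms] .
  fix i j assume "strict_lt r i j"
  then have ij: "(i, j) \<in> r" by (simp add: strict_lt_def)
  have "(\<Sum>J\<in>ks m. if finite J \<and> j \<in> J then lk m J else 0)
      \<le> (\<Sum>J\<in>ks m. if finite J \<and> i \<in> J then lk m J else 0)"
  proof (rule sum_mono)
    fix J assume "J \<in> ks m"
    then have "order_ideal n r J" using assms CI_props(4) by blast
    then have "j \<in> J \<Longrightarrow> i \<in> J" using ij unfolding order_ideal_def by blast
    then show "(if finite J \<and> j \<in> J then lk m J else 0) \<le> (if finite J \<and> i \<in> J then lk m J else 0)"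
      by auto
  qed
  then show "lk (ximg m) j \<le> lk (ximg m) i" by (simp add: lk_ximg)
qed

lemma sz_ximg:
  assumes "ks m \<subseteq> conn_ideals n r"
  shows "sz n (ximg m) = (\<Sum>J\<in>ks m. lk m J * card J)"
proof -
  have "sz n (ximg m) = (\<Sum>i\<in>{1..n}. \<Sum>J\<in>ks m. if finite J \<and> i \<in> J then lk m J else 0)"
    by (simp add: sz_def lk_ximg)
  also have "\<dots> = (\<Sum>J\<in>ks m. \<Sum>i\<in>{1..n}. if finite J \<and> i \<in> J then lk m J else 0)"
    by (rule sum.swap)
  also have "\<dots> = (\<Sum>J\<in>ks m. lk m J * card J)"
  proof (rule sum.cong[OF refl])
    fix J assume "J \<in> ks m"
    then have JC: "J \<in> conn_ideals n r" using assms by blast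
    have J: "finite J" "J \<subseteq> {1..n}" using CI_props[OF JC] by auto
    have "(\<Sum>i\<in>{1..n}. if finite J \<and> i \<in> J then lk m J else 0) = (\<Sum>i\<in>{1..n}. if i \<in> J then lk m J else 0)"
      using J by simp
    also have "\<dots> = lk m J * card ({1..n} \<inter> J)" by (simp add: sum.If_cases)
    also have "{1..n} \<inter> J = J" using J by blast
    finally show "(\<Sum>i\<in>{1..n}. if finite J \<and> i \<in> J then lk m J else 0) = lk m J * card J" .
  qed
  finally show ?thesis .
qed

lemma mu_bound:
  assumes "ks m \<subseteq> conn_ideals n r"
  shows "mu m \<le> 2 ^ n * sz n (ximg m)"
proof -
  have "mu m \<le> (\<Sum>J\<in>ks m. 2 ^ n * (lk m J * card J))"
    unfolding mu_def
  proof (rule sum_mono)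
    fix J assume "J \<in> ks m"
    then have JC: "J \<in> conn_ideals n r" using assms by blast
    have J: "finite J" "J \<subseteq> {1..n}" "J \<noteq> {}" using CI_props[OF JC] by auto
    have c1: "1 \<le> card J" using J by (simp add: Suc_le_eq card_gt_0_iff)
    have "card J \<le> card {1..n}" using J by (intro card_mono) auto
    then have c2: "card J \<le> n" by simp
    have "(2::nat) ^ card J \<le> 2 ^ n" using c2 by (simp add: power_increasing)
    also have "\<dots> \<le> 2 ^ n * card J" using c1 by simp
    finally show "lk m J * 2 ^ card J \<le> 2 ^ n * (lk m J * card J)"
      by (metis mult.left_commute mult_le_mono2)
  qed
  also have "\<dots> = 2 ^ n * sz n (ximg m)"
    by (simp add: sz_ximg[OF assms] sum_distrib_left)
  finally show ?thesis .
qed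

end




lemma minus_single_split:
  fixes m :: "'a \<Rightarrow>\<^sub>0 nat"
  assumes "D \<in> ks m"
  shows "m = (m - sg D 1) + sg D 1" "ks (m - sg D 1) \<subseteq> ks m"
proof -
  have "lk m D \<ge> 1" using assms by (simp add: in_keys_iff)
  then show "m = (m - sg D 1) + sg D 1"
    by (intro poly_mapping_eqI) (auto simp: lookup_add lookup_minus lookup_single when_def)
  show "ks (m - sg D 1) \<subseteq> ks m"
    by (auto simp: in_keys_iff lookup_minus)
qed

lemma laminar_sub: "laminar m \<Longrightarrow> ks m' \<subseteq> ks m \<Longrightarrow> laminar m'"
  unfolding laminar_def by blast

context
  fixes n :: nat and r :: "nat rel"
  assumes po: "partial_order_on {1..n} r"
begin

lemma keys_M2_CI:
  assumes A: "A \<in> conn_ideals n r" and B: "B \<in> conn_ideals n r" and ne: "A \<inter> B \<noteq> {}"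
  shows "ks (M2 r A B) \<subseteq> conn_ideals n r"
proof -
  have "A \<union> B \<in> conn_ideals n r" using conn_union[OF po A B ne] .
  moreover have "hasse_components r (A \<inter> B) \<subseteq> conn_ideals n r"
    using components_conn[OF po] ideal_inter[OF po] A B unfolding conn_ideals_def by blast
  ultimately show ?thesis using keys_M2 by blast
qed

lemma move:
  assumes m: "ks m \<subseteq> conn_ideals n r" and A: "A \<in> ks m" and B: "B \<in> ks m"
    and nt: "intersect_nontrivially A B"
  obtains m0 m' where "ks m0 \<subseteq> conn_ideals n r" "ks m' \<subseteq> conn_ideals n r"
    "ximg m' = ximg m" "mu m < mu m'"
    "(sg m 1 - sg m' 1 :: (nat set, 'k::field) mpoly) = sg m0 1 * syz r A B"
proof -
  have AB: "A \<noteq> B" "A \<inter> B \<noteq> {}" "\<not> A \<subseteq> B" "\<not> B \<subseteq> A"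
    using nt unfolding intersect_nontrivially_def by auto
  have AC: "A \<in> conn_ideals n r" and BC: "B \<in> conn_ideals n r" using A B m by auto
  have fA: "finite A" and fB: "finite B" using CI_props[OF po AC] CI_props[OF po BC] by auto
  define m0 where "m0 = m - mon2 A B"
  have lm: "lk (mon2 A B) J = (if J = A then 1 else 0) + (if J = B then 1 else 0)" for J
    by (simp add: mon2_def lookup_add lookup_single when_def)
  have m_eq: "m = m0 + mon2 A B"
  proof (rule poly_mapping_eqI)
    fix J
    have "lk m A \<ge> 1" "lk m B \<ge> 1" using A B by (auto simp: in_keys_iff)
    then show "lk m J = lk (m0 + mon2 A B) J"
      unfolding m0_def lookup_add lookup_minus lm using AB by auto
  qed
  have k0: "ks m0 \<subseteq> ks m" unfolding m0_def by (auto simp: in_keys_iff lookup_minus)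
  then have k0C: "ks m0 \<subseteq> conn_ideals n r" using m by blast
  define m' where "m' = m0 + M2 r A B"
  have "ks m' \<subseteq> ks m0 \<union> ks (M2 r A B)" unfolding m'_def by (rule keys_add)
  then have k'C: "ks m' \<subseteq> conn_ideals n r" using k0C keys_M2_CI[OF AC BC AB(2)] by blast
  have xe: "ximg m' = ximg m"
    unfolding m'_def ximg_add ximg_M2[OF fA fB] using m_eq by (metis ximg_add)
  have mu1: "mu m = mu m0 + (2 ^ card A + 2 ^ card B)"
    by (subst m_eq) (simp add: mu_add mon2_def mu_single)
  have mu2: "mu m' = mu m0 + (2 ^ card (A \<union> B) + (\<Sum>C\<in>hasse_components r (A \<inter> B). 2 ^ card C))"
    unfolding m'_def by (simp add: mu_add M2_def mu_single mu_sum)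
  have fI: "finite (A \<inter> B)" using fA by simp
  obtain x where x: "x \<in> A \<inter> B" using AB by blast
  have "hcomp r (A \<inter> B) x \<in> hasse_components r (A \<inter> B)"
    using x by (simp add: hasse_components_comp)
  then have s1: "1 \<le> (\<Sum>C\<in>hasse_components r (A \<inter> B). (2::nat) ^ card C)"
    using components_finite[OF fI, of r]
    by (metis (no_types, lifting) le_trans member_le_sum one_le_numeral one_le_power zero_le)
  have fU: "finite (A \<union> B)" using fA fB by simp
  have cA: "card A < card (A \<union> B)" using AB fU by (intro psubset_card_mono) auto
  have cB: "card B < card (A \<union> B)" using AB fU by (intro psubset_card_mono) auto
  define k where "k = card (A \<union> B)"
  have kpos: "k = Suc (k - 1)" using cA k_def by simp
  have "(2::nat) ^ card A \<le> 2 ^ (k - 1)" using cA k_def by (intro power_increasing) auto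
  moreover have "(2::nat) ^ card B \<le> 2 ^ (k - 1)" using cB k_def by (intro power_increasing) auto
  moreover have "(2::nat) ^ k = 2 * 2 ^ (k - 1)" by (subst kpos) simp
  ultimately have "(2::nat) ^ card A + 2 ^ card B \<le> 2 ^ card (A \<union> B)" unfolding k_def by linarith
  then have mu_lt: "mu m < mu m'" unfolding mu1 mu2 using s1 by linarith
  have "(sg m0 1 :: (nat set, 'k) mpoly) * syz r A B = sg (m0 + mon2 A B) 1 - sg (m0 + M2 r A B) 1"
    unfolding syz_alt by (simp add: right_diff_distrib mult_single)
  then have "(sg m 1 - sg m' 1 :: (nat set, 'k::field) mpoly) = sg m0 1 * syz r A B"
    unfolding m'_def using m_eq by simp
  then show ?thesis using that k0C k'C xe mu_lt by blast
qed

end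




context
  fixes n :: nat and r :: "nat rel"
  assumes po: "partial_order_on {1..n} r"
begin

lemma Pi_pairsI:
  "A \<in> conn_ideals n r \<Longrightarrow> B \<in> conn_ideals n r \<Longrightarrow> intersect_nontrivially A B \<Longrightarrow> {A, B} \<in> Pi_pairs n r"
  unfolding Pi_pairs_def by blast

lemma reduce:
  "ks m \<subseteq> conn_ideals n r \<Longrightarrow> \<exists>m'. laminar m' \<and> ks m' \<subseteq> conn_ideals n r \<and> ximg m' = ximg m \<and>
     (sg m 1 - sg m' 1 :: (nat set, 'k::field) mpoly) \<in> ideal_gen_S n r (syz_pair r ` Pi_pairs n r)"
proof -
  let ?I = "ideal_gen_S n r (syz_pair r ` Pi_pairs n r) :: (nat set, 'k) mpoly set"
  have "\<forall>m. 2 ^ n * sz n (ximg m) - mu m = N \<longrightarrow> ks m \<subseteq> conn_ideals n r \<longrightarrow>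
     (\<exists>m'. laminar m' \<and> ks m' \<subseteq> conn_ideals n r \<and> ximg m' = ximg m \<and> (sg m 1 - sg m' 1) \<in> ?I)" for N
  proof (induction N rule: less_induct)
    case (less N)
    show ?case
    proof (intro allI impI)
      fix m assume N: "2 ^ n * sz n (ximg m) - mu m = N" and m: "ks m \<subseteq> conn_ideals n r"
      show "\<exists>m'. laminar m' \<and> ks m' \<subseteq> conn_ideals n r \<and> ximg m' = ximg m \<and> (sg m 1 - sg m' 1) \<in> ?I"
      proof (cases "laminar m")
        case True
        then show ?thesis using m IG_zero by force
      next
        case False
        then obtain A B where AB: "A \<in> ks m" "B \<in> ks m" "intersect_nontrivially A B"
          unfolding laminar_def by blast
        obtain m0 m1 where mm: "ks m0 \<subseteq> conn_ideals n r" "ks m1 \<subseteq> conn_ideals n r"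
          "ximg m1 = ximg m" "mu m < mu m1"
          "(sg m 1 - sg m1 1 :: (nat set, 'k::field) mpoly) = sg m0 1 * syz r A B"
          using move[OF po m AB] by blast
        have "mu m1 \<le> 2 ^ n * sz n (ximg m1)" by (rule mu_bound[OF po mm(2)])
        then have "mu m1 \<le> 2 ^ n * sz n (ximg m)" using mm(3) by simp
        then have "2 ^ n * sz n (ximg m) - mu m1 < N" using N mm(4) by linarith
        then have "2 ^ n * sz n (ximg m1) - mu m1 < N" using mm(3) by simp
        then obtain m2 where m2: "laminar m2" "ks m2 \<subseteq> conn_ideals n r" "ximg m2 = ximg m1"
          "(sg m1 1 - sg m2 1) \<in> ?I"
          using less mm(2) by blast
        have AC: "A \<in> conn_ideals n r" "B \<in> conn_ideals n r" using AB m by auto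
        have "syz r A B \<in> syz_pair r ` Pi_pairs n r"
          using Pi_pairsI[OF AC AB(3)] syz_pair_eq[of r A B] by (metis image_eqI)
        then have "(sg m0 1 :: (nat set, 'k) mpoly) * syz r A B \<in> ?I"
          by (intro IG_mult S_single mm(1) IG_gen)
        then have "(sg m 1 - sg m1 1 :: (nat set, 'k::field) mpoly) + (sg m1 1 - sg m2 1) \<in> ?I"
          using mm(5) m2(4) IG_add by metis
        then have "(sg m 1 - sg m2 1 :: (nat set, 'k::field) mpoly) \<in> ?I" by simp
        then show ?thesis using m2 mm(3) by auto
      qed
    qed
  qed
  then show "ks m \<subseteq> conn_ideals n r \<Longrightarrow> ?thesis" by blast
qed

lemma lam_core:
  assumes m: "ks m \<subseteq> conn_ideals n r" "laminar m" and x: "lk (ximg m) x \<noteq> 0"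
  shows "hcomp r {i. lk (ximg m) i \<noteq> 0} x \<in> ks m"
proof -
  define S0 where "S0 = {i. lk (ximg m) i \<noteq> 0}"
  define K where "K = {J \<in> ks m. x \<in> J}"
  have fK: "finite K" unfolding K_def by simp
  have neK: "K \<noteq> {}" using lk_ximg_pos[OF x] unfolding K_def by blast
  define c where "c = Max (card ` K)"
  have "c \<in> card ` K" unfolding c_def using fK neK by (intro Max_in) auto
  then obtain J0 where J0: "J0 \<in> K" "card J0 = c" by (metis imageE)
  have maxc: "card J \<le> card J0" if "J \<in> K" for J
    unfolding J0(2) c_def using fK that by simp
  have J0m: "J0 \<in> ks m" "x \<in> J0" using J0 unfolding K_def by auto
  have J0C: "J0 \<in> conn_ideals n r" using J0m m by blast
  note J0P = CI_props[OF po J0C]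
  have inS0: "J \<in> ks m \<Longrightarrow> i \<in> J \<Longrightarrow> i \<in> S0" for J i
  proof -
    assume a: "J \<in> ks m" "i \<in> J"
    then have "finite J" using m CI_props[OF po] by blast
    then have "lk m J \<le> lk (ximg m) i" using lk_ximg_ge a by blast
    then show "i \<in> S0" using a unfolding S0_def by (auto simp: in_keys_iff)
  qed
  have J0S: "J0 \<subseteq> S0" using inS0 J0m by blast
  have sub1: "J0 \<subseteq> hcomp r S0 x"
  proof
    fix y assume "y \<in> J0"
    then have "hasse_conn r J0 x y" using J0P(5) J0m by blast
    then have "hasse_conn r S0 x y" using hasse_conn_mono[OF J0S] by blast
    then show "y \<in> hcomp r S0 x" using \<open>y \<in> J0\<close> J0S unfolding hcomp_def by blast
  qed
  have sub2: "hcomp r S0 x \<subseteq> J0"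
  proof
    fix y assume "y \<in> hcomp r S0 x"
    then have "hasse_conn r S0 x y" unfolding hcomp_def by blast
    then show "y \<in> J0" unfolding hasse_conn_def
    proof (induction rule: rtranclp_induct)
      case base then show ?case using J0m by simp
    next
      case (step y z)
      have yz: "z \<in> S0" "covers r y z \<or> covers r z y" using step(2) unfolding hasse_adj_def by auto
      show ?case
      proof (cases "covers r z y")
        case True
        then have "(z, y) \<in> r" unfolding covers_def strict_lt_def by blast
        then show ?thesis using step(3) J0P(4) unfolding order_ideal_def by blast
      next
        case False
        then have "(y, z) \<in> r" using yz unfolding covers_def strict_lt_def by blast
        from yz(1) have "lk (ximg m) z \<noteq> 0" unfolding S0_def by simp
        then obtain J' where J': "J' \<in> ks m" "z \<in> J'" using lk_ximg_pos by blast
        have J'C: "J' \<in> conn_ideals n r" using J' m by blast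
        note J'P = CI_props[OF po J'C]
        have "y \<in> J'" using J' \<open>(y, z) \<in> r\<close> J'P(4) unfolding order_ideal_def by blast
        then have "J0 \<inter> J' \<noteq> {}" using step(3) by blast
        moreover have "\<not> intersect_nontrivially J0 J'" using m(2) J0m J' unfolding laminar_def by blast
        ultimately have "J0 \<subseteq> J' \<or> J' \<subseteq> J0" unfolding intersect_nontrivially_def by blast
        then show ?thesis
        proof
          assume "J' \<subseteq> J0" then show ?thesis using J' by blast
        next
          assume sub: "J0 \<subseteq> J'"
          then have "J' \<in> K" using J' J0m unfolding K_def by blast
          then have "card J' \<le> card J0" by (rule maxc)
          moreover have "card J0 \<le> card J'" by (rule card_mono[OF J'P(1) sub])
          ultimately have "card J0 = card J'" by linarith
          then have "J0 = J'" by (rule card_subset_eq[OF J'P(1) sub])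
          then show ?thesis using J' by simp
        qed
      qed
    qed
  qed
  have "hcomp r S0 x = J0" using sub1 sub2 by blast
  then show ?thesis using J0m unfolding S0_def by simp
qed

lemma lam_unique:
  "ks m1 \<subseteq> conn_ideals n r \<Longrightarrow> laminar m1 \<Longrightarrow> ks m2 \<subseteq> conn_ideals n r \<Longrightarrow> laminar m2 \<Longrightarrow>
   ximg m1 = ximg m2 \<Longrightarrow> m1 = m2"
proof -
  have "\<forall>m1 m2. sz n (ximg m1) = N \<longrightarrow> ks m1 \<subseteq> conn_ideals n r \<longrightarrow> laminar m1 \<longrightarrow>
     ks m2 \<subseteq> conn_ideals n r \<longrightarrow> laminar m2 \<longrightarrow> ximg m1 = ximg m2 \<longrightarrow> m1 = m2" for N
  proof (induction N rule: less_induct)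
    case (less N)
    show ?case
    proof (intro allI impI)
      fix m1 m2 assume N: "sz n (ximg m1) = N" and m1: "ks m1 \<subseteq> conn_ideals n r" "laminar m1"
        and m2: "ks m2 \<subseteq> conn_ideals n r" "laminar m2" and eq: "ximg m1 = ximg m2"
      have fin_ne: "\<forall>J\<in>ks m. finite J \<and> J \<noteq> {}" if "ks m \<subseteq> conn_ideals n r" for m
        using that CI_props[OF po] by blast
      show "m1 = m2"
      proof (cases "m1 = 0")
        case True
        then have "ximg m2 = 0" using eq by simp
        then show ?thesis using True ximg_eq_zero fin_ne[OF m2(1)] by metis
      next
        case False
        then obtain J where J: "J \<in> ks m1" by (metis keys_eq_empty ex_in_conv)
        then have JP: "finite J" "J \<noteq> {}" using fin_ne[OF m1(1)] by auto
        then obtain x where x: "x \<in> J" by blast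
        have "lk m1 J \<le> lk (ximg m1) x" using lk_ximg_ge J JP x by blast
        then have x1: "lk (ximg m1) x \<noteq> 0" using J by (auto simp: in_keys_iff)
        then have x2: "lk (ximg m2) x \<noteq> 0" using eq by simp
        define D where "D = hcomp r {i. lk (ximg m1) i \<noteq> 0} x"
        have D1: "D \<in> ks m1" unfolding D_def by (rule lam_core[OF m1 x1])
        have D2: "D \<in> ks m2" unfolding D_def eq by (rule lam_core[OF m2 x2])
        have DC: "D \<in> conn_ideals n r" using D1 m1 by blast
        note DP = CI_props[OF po DC]
        define m1' where "m1' = m1 - sg D 1"
        define m2' where "m2' = m2 - sg D 1"
        note s1 = minus_single_split[OF D1, folded m1'_def]
        note s2 = minus_single_split[OF D2, folded m2'_def]
        have "ximg m1' + ximg (sg D 1) = ximg m2' + ximg (sg D 1)"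
          using eq s1(1) s2(1) by (metis ximg_add)
        then have eq': "ximg m1' = ximg m2'" by simp
        have "sz n (ximg m1) = sz n (ximg m1') + card D"
          using s1(1) DP(3) by (metis sz_add sz_xe ximg_add ximg_single)
        moreover have "card D > 0" using DP(1,2) by (simp add: card_gt_0_iff)
        ultimately have lt: "sz n (ximg m1') < N" using N by simp
        have "m1' = m2'"
          using less[OF lt] s1(2) s2(2) m1 m2 eq' laminar_sub by blast
        then show ?thesis using s1(1) s2(1) by metis
      qed
    qed
  qed
  then show "ks m1 \<subseteq> conn_ideals n r \<Longrightarrow> laminar m1 \<Longrightarrow> ks m2 \<subseteq> conn_ideals n r \<Longrightarrow> laminar m2 \<Longrightarrow>
   ximg m1 = ximg m2 \<Longrightarrow> m1 = m2" by blast
qed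

end




lemma lk_phi: "lk (phi p) e = (\<Sum>m\<in>ks p. if ximg m = e then lk p m else 0)"
  by (simp add: phi_alt lookup_sum lookup_single when_def)

lemma pm_expand_superset:
  assumes "finite A" "ks p \<subseteq> A"
  shows "p = (\<Sum>m\<in>A. sg m (lk p m))"
proof -
  have "p = (\<Sum>m\<in>ks p. sg m (lk p m))" by (rule pm_expand)
  also have "\<dots> = (\<Sum>m\<in>A. sg m (lk p m))"
    by (rule sum.mono_neutral_left) (use assms in \<open>auto simp: in_keys_iff\<close>)
  finally show ?thesis .
qed

lemma total_deg_superset: "finite A \<Longrightarrow> ks m \<subseteq> A \<Longrightarrow> total_deg m = (\<Sum>v\<in>A. lk m v)"
  unfolding total_deg_def by (rule sum.mono_neutral_left) (auto simp: in_keys_iff)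

lemma total_deg_add: "total_deg (a + b) = total_deg a + total_deg b"
proof -
  have f: "finite (ks a \<union> ks b)" by simp
  show ?thesis
    unfolding total_deg_superset[OF f keys_add] total_deg_superset[OF f Un_upper1]
      total_deg_superset[OF f Un_upper2]
    by (simp add: lookup_add sum.distrib)
qed

lemma total_deg_zero: "total_deg a = 0 \<Longrightarrow> a = 0"
  unfolding total_deg_def
  by (metis (no_types, lifting) finite_keys in_keys_iff keys_eq_empty ex_in_conv sum_eq_0_iff)

lemma lk_ximg_le_deg: "lk (ximg m) i \<le> total_deg m"
  unfolding lk_ximg total_deg_def by (rule sum_mono) auto

lemma lk_mult_deg2:
  assumes M: "total_deg M = 2" and g: "\<forall>b\<in>ks g. 2 \<le> total_deg b"
  shows "lk (c * g) M = lk c 0 * lk g M"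
proof -
  have "c * g = (\<Sum>a\<in>ks c. sg a (lk c a)) * (\<Sum>b\<in>ks g. sg b (lk g b))"
    using pm_expand[of c] pm_expand[of g] by simp
  also have "\<dots> = (\<Sum>a\<in>ks c. \<Sum>b\<in>ks g. sg (a + b) (lk c a * lk g b))"
    by (simp add: sum_product mult_single)
  finally have "lk (c * g) M = (\<Sum>a\<in>ks c. \<Sum>b\<in>ks g. if a + b = M then lk c a * lk g b else 0)"
    by (simp add: lookup_sum lookup_single when_def)
  also have "\<dots> = (\<Sum>a\<in>ks c. \<Sum>b\<in>ks g. if a = 0 then (if b = M then lk c a * lk g b else 0) else 0)"
  proof (intro sum.cong refl)
    fix a b assume b: "b \<in> ks g"
    show "(if a + b = M then lk c a * lk g b else 0) = (if a = 0 then (if b = M then lk c a * lk g b else 0) else 0)"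
    proof (cases "a + b = M")
      case True
      then have "total_deg a + total_deg b = 2" using M total_deg_add by metis
      then have "total_deg a = 0" using g b by fastforce
      then have "a = 0" by (rule total_deg_zero)
      then show ?thesis using True by simp
    next
      case False
      then show ?thesis by auto
    qed
  qed
  also have "\<dots> = (\<Sum>a\<in>ks c. if a = 0 then (\<Sum>b\<in>ks g. if b = M then lk c a * lk g b else 0) else 0)"
    by (intro sum.cong refl) auto
  also have "\<dots> = lk c 0 * lk g M"
    by (simp add: sum.delta in_keys_iff)
  finally show ?thesis .
qed

lemma lk_mon2: "lk (mon2 A B) X = (if X = A then 1 else 0) + (if X = B then 1 else 0)"
  by (simp add: mon2_def lookup_add lookup_single when_def)

lemma total_deg_mon2: "A \<noteq> B \<Longrightarrow> total_deg (mon2 A B) = 2"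
proof -
  assume AB: "A \<noteq> B"
  have "total_deg (mon2 A B) = (\<Sum>v\<in>{A,B}. lk (mon2 A B) v)"
    by (rule total_deg_superset) (simp_all add: keys_mon2)
  then show ?thesis using AB by (simp add: lk_mon2)
qed

lemma lk_sg: "lk (sg a (1::nat)) b = (if a = b then 1 else 0)"
  by (simp add: lookup_single)

lemma lk_M2_ge:
  assumes "finite (A \<inter> B)" "C \<in> hasse_components r (A \<inter> B)"
  shows "lk (M2 r A B) (A \<union> B) \<ge> 1" "lk (M2 r A B) C \<ge> 1"
proof -
  have "lk (M2 r A B) X = (if A \<union> B = X then 1 else 0) + (\<Sum>C\<in>hasse_components r (A \<inter> B). if C = X then (1::nat) else 0)" for X
    unfolding M2_def lookup_add lookup_sum lk_sg ..
  moreover have "(1::nat) \<le> (\<Sum>C'\<in>hasse_components r (A \<inter> B). if C' = C then 1 else 0)"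
    using assms components_finite[OF assms(1), of r] by (simp add: sum.delta')
  ultimately show "lk (M2 r A B) (A \<union> B) \<ge> 1" "lk (M2 r A B) C \<ge> 1" by auto
qed

lemma M2_ne_mon2:
  assumes fin: "finite K1" "finite K2" and ntK: "intersect_nontrivially K1 K2"
    and ntJ: "intersect_nontrivially J1 J2"
  shows "M2 r K1 K2 \<noteq> mon2 J1 J2"
proof
  assume eq: "M2 r K1 K2 = mon2 J1 J2"
  have fI: "finite (K1 \<inter> K2)" using fin by simp
  obtain x where x: "x \<in> K1 \<inter> K2" using ntK unfolding intersect_nontrivially_def by blast
  define C0 where "C0 = hcomp r (K1 \<inter> K2) x"
  have C0: "C0 \<in> hasse_components r (K1 \<inter> K2)" unfolding C0_def using x by (simp add: hasse_components_comp)
  have inJ: "X = J1 \<or> X = J2" if "lk (M2 r K1 K2) X \<ge> 1" for X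
    using that unfolding eq lk_mon2 by (auto split: if_splits)
  have u: "K1 \<union> K2 = J1 \<or> K1 \<union> K2 = J2" using inJ lk_M2_ge(1)[OF fI C0] by blast
  have c: "C0 = J1 \<or> C0 = J2" using inJ lk_M2_ge(2)[OF fI C0] by blast
  have sub: "C0 \<subseteq> K1 \<union> K2" using components_sub[OF C0] by blast
  have ne: "C0 \<noteq> K1 \<union> K2" using components_sub[OF C0] ntK unfolding intersect_nontrivially_def by blast
  show False using u c sub ne ntJ unfolding intersect_nontrivially_def by blast
qed

lemma lk_syz:
  "lk (syz r K1 K2 :: (nat set, 'k::field) mpoly) M = (if mon2 K1 K2 = M then 1 else 0) - (if M2 r K1 K2 = M then 1 else 0)"
  by (simp add: syz_alt lookup_minus lookup_single when_def)

lemma lk_syz_self: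
  assumes "finite J1" "finite J2" "intersect_nontrivially J1 J2"
  shows "lk (syz r J1 J2 :: (nat set, 'k::field) mpoly) (mon2 J1 J2) = 1"
  using M2_ne_mon2[OF assms assms(3)] by (simp add: lk_syz)

lemma coeff_syz:
  assumes fin: "finite K1" "finite K2" and ntK: "intersect_nontrivially K1 K2"
    and ntJ: "intersect_nontrivially J1 J2"
    and nz: "lk (syz r K1 K2 :: (nat set, 'k::field) mpoly) (mon2 J1 J2) \<noteq> 0"
  shows "{K1, K2} = {J1, J2}"
proof -
  have "mon2 K1 K2 = mon2 J1 J2" using nz M2_ne_mon2[OF fin ntK ntJ] by (auto simp: lk_syz split: if_splits)
  then have e: "lk (mon2 K1 K2) X = lk (mon2 J1 J2) X" for X by simp
  have mem: "X \<in> {A, B}" if "lk (mon2 A B) X \<noteq> 0" for A B X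
    using that unfolding lk_mon2 by (cases "X = A"; cases "X = B") auto
  have pos: "lk (mon2 A B) A \<noteq> 0" "lk (mon2 A B) B \<noteq> 0" for A B
    unfolding lk_mon2 by auto
  have "J1 \<in> {K1, K2}" "J2 \<in> {K1, K2}" "K1 \<in> {J1, J2}" "K2 \<in> {J1, J2}"
    using mem pos e by metis+
  then show ?thesis by blast
qed




context
  fixes n :: nat and r :: "nat rel"
  assumes po: "partial_order_on {1..n} r"
begin

lemma exist_mono:
  "weak_P_partition n r f \<Longrightarrow> \<exists>m. ks m \<subseteq> conn_ideals n r \<and> ximg m = f"
proof -
  have "\<forall>f. sz n f = N \<longrightarrow> weak_P_partition n r f \<longrightarrow> (\<exists>m. ks m \<subseteq> conn_ideals n r \<and> ximg m = f)" for N
  proof (induction N rule: less_induct)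
    case (less N)
    show ?case
    proof (intro allI impI)
      fix f assume N: "sz n f = N" and w: "weak_P_partition n r f"
      have kf: "ks f \<subseteq> {1..n}" and mono: "\<And>i j. strict_lt r i j \<Longrightarrow> lk f j \<le> lk f i"
        using w unfolding weak_P_partition_def by auto
      show "\<exists>m. ks m \<subseteq> conn_ideals n r \<and> ximg m = f"
      proof (cases "f = 0")
        case True
        then show ?thesis by (intro exI[of _ 0]) simp
      next
        case False
        then obtain x where x: "x \<in> ks f" by (metis keys_eq_empty ex_in_conv)
        define S0 where "S0 = ks f"
        have leq: "lk f c \<ge> lk f j" if "(c, j) \<in> r" for c j
          using mono[of c j] that by (cases "c = j") (auto simp: strict_lt_def)
        have S0I: "order_ideal n r S0"
          unfolding order_ideal_def S0_def
        proof (intro conjI allI impI)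
          show "ks f \<subseteq> {1..n}" by (rule kf)
          fix p i assume "i \<in> ks f \<and> (p, i) \<in> r"
          then show "p \<in> ks f" using leq[of p i] by (auto simp: in_keys_iff)
        qed
        define D where "D = hcomp r S0 x"
        have DC: "D \<in> conn_ideals n r" unfolding D_def using ideal_comp_conn[OF po S0I] x S0_def by blast
        note DP = CI_props[OF po DC]
        have DS: "D \<subseteq> S0" unfolding D_def hcomp_def by blast
        define f' where "f' = f - xe D 1"
        have lf': "lk f' i = lk f i - (if i \<in> D then 1 else 0)" for i
          unfolding f'_def lookup_minus lk_xe using DP(1) by simp
        have f_eq: "f = f' + xe D 1"
        proof (rule poly_mapping_eqI)
          fix i
          have "i \<in> D \<Longrightarrow> lk f i \<ge> 1" using DS unfolding S0_def by (auto simp: in_keys_iff)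
          then show "lk f i = lk (f' + xe D 1) i"
            unfolding lookup_add lf' lk_xe using DP(1) by auto
        qed
        have w': "weak_P_partition n r f'"
          unfolding weak_P_partition_def
        proof (intro conjI allI impI)
          show "ks f' \<subseteq> {1..n}" using kf by (auto simp: in_keys_iff lf')
          fix i j assume ij: "strict_lt r i j"
          then have rij: "(i, j) \<in> r" by (simp add: strict_lt_def)
          show "lk f' j \<le> lk f' i"
          proof (cases "j \<in> D")
            case True
            then have "i \<in> D" using rij DP(4) unfolding order_ideal_def by blast
            then show ?thesis using True mono[OF ij] unfolding lf' by simp
          next
            case jD: False
            show ?thesis
            proof (cases "lk f j = 0")
              case True then show ?thesis unfolding lf' using jD by simp
            next
              case False
              have "i \<notin> D"
              proof
                assume iD: "i \<in> D"
                have "hasse_conn r S0 i j"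
                proof (rule chain_lemma[OF po ij])
                  fix c assume "(i, c) \<in> r" "(c, j) \<in> r"
                  then have "lk f c \<ge> lk f j" using leq by blast
                  then show "c \<in> S0" using False unfolding S0_def by (auto simp: in_keys_iff)
                qed
                moreover have "hasse_conn r S0 x i" using iD unfolding D_def hcomp_def by blast
                ultimately have "hasse_conn r S0 x j" by (rule hasse_conn_trans[rotated])
                moreover have "j \<in> S0" using False unfolding S0_def by (simp add: in_keys_iff)
                ultimately have "j \<in> D" unfolding D_def hcomp_def by blast
                then show False using jD by simp
              qed
              then show ?thesis unfolding lf' using jD mono[OF ij] by simp
            qed
          qed
        qed
        have "sz n f = sz n f' + card D" using f_eq sz_add sz_xe[OF DP(3)] by metis
        moreover have "card D > 0" using DP(1,2) by (simp add: card_gt_0_iff)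
        ultimately have "sz n f' < N" using N by simp
        then obtain m' where m': "ks m' \<subseteq> conn_ideals n r" "ximg m' = f'" using less w' by blast
        have "ks (m' + sg D 1) \<subseteq> conn_ideals n r" using keys_add[of m' "sg D 1"] m' DC by auto
        moreover have "ximg (m' + sg D 1) = f" using m' f_eq by (simp add: ximg_add ximg_single)
        ultimately show ?thesis by blast
      qed
    qed
  qed
  then show "weak_P_partition n r f \<Longrightarrow> ?thesis" by blast
qed

end




context
  fixes n :: nat and r :: "nat rel"
  assumes po: "partial_order_on {1..n} r"
begin

lemma surj_phi: "phi ` S_ring n r = (R_P n r :: (nat, 'k::field) mpoly set)"
proof
  show "phi ` S_ring n r \<subseteq> (R_P n r :: (nat, 'k::field) mpoly set)"
  proof
    fix y :: "(nat, 'k) mpoly" assume "y \<in> phi ` S_ring n r"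
    then obtain p where p: "p \<in> S_ring n r" "y = phi p" by blast
    define F where "F = ximg ` ks p"
    have fF: "finite F" unfolding F_def by simp
    have kF: "ks (phi p) \<subseteq> F"
    proof
      fix e assume "e \<in> ks (phi p)"
      then have "(\<Sum>m\<in>ks p. if ximg m = e then lk p m else 0) \<noteq> 0"
        by (simp add: in_keys_iff lk_phi)
      then obtain m where "m \<in> ks p" "(if ximg m = e then lk p m else 0) \<noteq> 0"
        by (rule sum.not_neutral_contains_not_neutral)
      then have "m \<in> ks p" "ximg m = e" by (auto split: if_splits)
      then show "e \<in> F" unfolding F_def by blast
    qed
    have "y = (\<Sum>f\<in>F. sg f (lk (phi p) f))" unfolding p(2) by (rule pm_expand_superset[OF fF kF])
    moreover have "F \<subseteq> {f. weak_P_partition n r f}"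
      using p(1) ximg_weak[OF po] unfolding F_def S_ring_def by blast
    ultimately have "\<exists>F c. y = (\<Sum>f\<in>F. sg f (c f)) \<and> finite F \<and> F \<subseteq> {f. weak_P_partition n r f}"
      using fF by (intro exI[of _ F] exI[of _ "lk (phi p)"]) simp
    then show "y \<in> R_P n r" unfolding R_P_def by (simp only: mem_Collect_eq)
  qed
next
  show "(R_P n r :: (nat, 'k::field) mpoly set) \<subseteq> phi ` S_ring n r"
  proof
    fix y :: "(nat, 'k) mpoly" assume "y \<in> R_P n r"
    then obtain F c where y: "y = (\<Sum>f\<in>F. sg f (c f))" "finite F" "F \<subseteq> {f. weak_P_partition n r f}"
      unfolding R_P_def by blast
    define mf where "mf f = (SOME m. ks m \<subseteq> conn_ideals n r \<and> ximg m = f)" for f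
    have mf: "ks (mf f) \<subseteq> conn_ideals n r \<and> ximg (mf f) = f" if "f \<in> F" for f
    proof -
      have "weak_P_partition n r f" using y(3) that by blast
      then have "\<exists>m. ks m \<subseteq> conn_ideals n r \<and> ximg m = f" by (rule exist_mono[OF po])
      then show ?thesis unfolding mf_def by (rule someI_ex)
    qed
    define p where "p = (\<Sum>f\<in>F. sg (mf f) (c f))"
    have "p \<in> S_ring n r" unfolding p_def
    proof (intro S_sum S_single)
      fix f assume "f \<in> F" then show "ks (mf f) \<subseteq> conn_ideals n r" using mf by blast
    qed
    moreover have "phi p = y" unfolding p_def phi_sum phi_single y(1)
    proof (intro sum.cong refl)
      fix f assume "f \<in> F" then show "sg (ximg (mf f)) (c f) = sg f (c f)" using mf by simp
    qed
    ultimately show "y \<in> phi ` S_ring n r" by blast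
  qed
qed

lemma kernel_laminar_zero:
  assumes q: "\<forall>w\<in>ks q. laminar w \<and> ks w \<subseteq> conn_ideals n r" and z: "phi q = 0"
  shows "q = 0"
proof (rule ccontr)
  assume "q \<noteq> 0"
  then obtain w where w: "w \<in> ks q" by (metis keys_eq_empty ex_in_conv)
  have "lk (phi q) (ximg w) = (\<Sum>m\<in>ks q. if ximg m = ximg w then lk q m else 0)" by (rule lk_phi)
  also have "\<dots> = (\<Sum>m\<in>ks q. if m = w then lk q m else 0)"
  proof (intro sum.cong refl)
    fix m assume "m \<in> ks q"
    then have "ximg m = ximg w \<Longrightarrow> m = w" using lam_unique[OF po] q w by blast
    then show "(if ximg m = ximg w then lk q m else 0) = (if m = w then lk q m else 0)" by auto
  qed
  also have "\<dots> = lk q w" using w by (simp add: sum.delta')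
  finally show False using z w by (simp add: in_keys_iff)
qed

lemma G_sub_IP: "(syz_pair r ` Pi_pairs n r :: (nat set, 'k::field) mpoly set) \<subseteq> I_P n r"
proof
  fix g :: "(nat set, 'k) mpoly" assume "g \<in> syz_pair r ` Pi_pairs n r"
  then obtain A B where "g = syz_pair r {A, B}" "A \<in> conn_ideals n r" "B \<in> conn_ideals n r"
    "intersect_nontrivially A B" unfolding Pi_pairs_def by blast
  then show "g \<in> I_P n r" using syz_in_IP[OF po] syz_pair_eq by metis
qed

lemma IP_sub_IG:
  "(I_P n r :: (nat set, 'k::field) mpoly set) \<subseteq> ideal_gen_S n r (syz_pair r ` Pi_pairs n r)"
proof
  let ?I = "ideal_gen_S n r (syz_pair r ` Pi_pairs n r) :: (nat set, 'k) mpoly set"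
  fix p :: "(nat set, 'k) mpoly" assume "p \<in> I_P n r"
  then have pS: "p \<in> S_ring n r" and p0: "phi p = 0" by (auto simp: I_P_def)
  define Lc where "Lc e = (SOME m. laminar m \<and> ks m \<subseteq> conn_ideals n r \<and> ximg m = e)" for e
  have Lc: "laminar (Lc (ximg m)) \<and> ks (Lc (ximg m)) \<subseteq> conn_ideals n r \<and> ximg (Lc (ximg m)) = ximg m
     \<and> (sg m 1 - sg (Lc (ximg m)) 1 :: (nat set, 'k) mpoly) \<in> ?I"
    if "m \<in> ks p" for m
  proof -
    have mC: "ks m \<subseteq> conn_ideals n r" using pS that unfolding S_ring_def by blast
    obtain m' where m': "laminar m'" "ks m' \<subseteq> conn_ideals n r" "ximg m' = ximg m"
      "(sg m 1 - sg m' 1 :: (nat set, 'k) mpoly) \<in> ?I"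
      using reduce[OF po mC] by blast
    have ex: "\<exists>x. laminar x \<and> ks x \<subseteq> conn_ideals n r \<and> ximg x = ximg m" using m' by blast
    have L: "laminar (Lc (ximg m)) \<and> ks (Lc (ximg m)) \<subseteq> conn_ideals n r \<and> ximg (Lc (ximg m)) = ximg m"
      unfolding Lc_def using ex by (rule someI_ex)
    have "ximg (Lc (ximg m)) = ximg m'" using L m'(3) by simp
    then have "Lc (ximg m) = m'"
      using lam_unique[OF po, of "Lc (ximg m)" m'] L m'(1,2) by blast
    then show ?thesis using L m' by simp
  qed
  define q where "q = (\<Sum>m\<in>ks p. sg (Lc (ximg m)) (lk p m))"
  have "p - q = (\<Sum>m\<in>ks p. sg m (lk p m) - sg (Lc (ximg m)) (lk p m))"
    unfolding q_def by (subst (1) pm_expand[of p]) (simp add: sum_subtractf)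
  also have "\<dots> = (\<Sum>m\<in>ks p. sg 0 (lk p m) * (sg m 1 - sg (Lc (ximg m)) 1))"
    by (simp add: right_diff_distrib mult_single)
  finally have d: "p - q = \<dots>" .
  have dI: "p - q \<in> ?I" unfolding d
  proof (rule IG_sum)
    fix m assume "m \<in> ks p"
    then have "(sg m 1 - sg (Lc (ximg m)) 1 :: (nat set, 'k) mpoly) \<in> ?I" using Lc by blast
    then show "sg 0 (lk p m) * (sg m 1 - sg (Lc (ximg m)) 1) \<in> ?I" by (rule IG_mult[OF S_const])
  qed
  have "phi (p - q) = 0"
    using dI IG_subset_IP[OF G_sub_IP] unfolding I_P_def by blast
  then have "phi q = 0" using p0 by (simp add: phi_diff)
  moreover have "\<forall>w\<in>ks q. laminar w \<and> ks w \<subseteq> conn_ideals n r"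
  proof
    fix w assume "w \<in> ks q"
    then obtain m where "m \<in> ks p" "w \<in> ks (sg (Lc (ximg m)) (lk p m))"
      using keys_sum[of "\<lambda>m. sg (Lc (ximg m)) (lk p m)" "ks p"] unfolding q_def by blast
    then have "w = Lc (ximg m)" "m \<in> ks p" by (auto split: if_splits)
    then show "laminar w \<and> ks w \<subseteq> conn_ideals n r" using Lc by blast
  qed
  ultimately have "q = 0" by (rule kernel_laminar_zero[rotated])
  then show "p \<in> ?I" using dI by simp
qed

lemma deg2:
  assumes "p \<in> (I_P n r :: (nat set, 'k::field) mpoly set)" "m \<in> ks p"
  shows "2 \<le> total_deg m"
proof (rule ccontr)
  assume "\<not> 2 \<le> total_deg m"
  then have d1: "total_deg m \<le> 1" by simp
  have pS: "p \<in> S_ring n r" and p0: "phi p = 0" using assms(1) by (auto simp: I_P_def)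
  have kC: "ks m' \<subseteq> conn_ideals n r" if "m' \<in> ks p" for m'
    using pS that unfolding S_ring_def by blast
  have lam: "laminar m'" if "ks m' \<subseteq> conn_ideals n r" "\<forall>i. lk (ximg m') i \<le> 1" for m'
    unfolding laminar_def
  proof (intro ballI notI)
    fix J K assume JK: "J \<in> ks m'" "K \<in> ks m'" "intersect_nontrivially J K"
    then have ne: "J \<noteq> K" and "J \<inter> K \<noteq> {}" unfolding intersect_nontrivially_def by auto
    then obtain i where i: "i \<in> J" "i \<in> K" by blast
    have fJ: "finite J" "finite K" using JK that(1) CI_props[OF po] by blast+
    have "(\<Sum>X\<in>{J, K}. if finite X \<and> i \<in> X then lk m' X else 0)
        \<le> (\<Sum>X\<in>ks m'. if finite X \<and> i \<in> X then lk m' X else 0)"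
      by (rule sum_mono2) (use JK in auto)
    then have "lk m' J + lk m' K \<le> lk (ximg m') i" using ne i fJ by (simp add: lk_ximg)
    moreover have "lk m' J \<ge> 1" "lk m' K \<ge> 1" using JK by (auto simp: in_keys_iff)
    ultimately show False using that(2) by (metis add_le_mono le_trans not_one_le_zero one_add_one
        Suc_1 not_less_eq_eq)
  qed
  have le1: "\<forall>i. lk (ximg m) i \<le> 1" using lk_ximg_le_deg d1 le_trans by blast
  have lm: "laminar m" using lam kC[OF assms(2)] le1 by blast
  have "lk (phi p) (ximg m) = (\<Sum>m'\<in>ks p. if ximg m' = ximg m then lk p m' else 0)" by (rule lk_phi)
  also have "\<dots> = (\<Sum>m'\<in>ks p. if m' = m then lk p m' else 0)"
  proof (intro sum.cong refl)
    fix m' assume m': "m' \<in> ks p"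
    have "ximg m' = ximg m \<Longrightarrow> m' = m"
    proof -
      assume e: "ximg m' = ximg m"
      then have "laminar m'" using lam kC[OF m'] le1 by simp
      then show "m' = m" using lam_unique[OF po kC[OF m'] _ kC[OF assms(2)] lm e] by blast
    qed
    then show "(if ximg m' = ximg m then lk p m' else 0) = (if m' = m then lk p m' else 0)" by auto
  qed
  also have "\<dots> = lk p m" using assms(2) by (simp add: sum.delta')
  finally show False using p0 assms(2) by (simp add: in_keys_iff)
qed

end




lemma Pi_elim:
  assumes "p \<in> Pi_pairs n r"
  obtains A B where "p = {A, B}" "A \<in> conn_ideals n r" "B \<in> conn_ideals n r" "intersect_nontrivially A B"
  using assms unfolding Pi_pairs_def by blast

context
  fixes n :: nat and r :: "nat rel"
  assumes po: "partial_order_on {1..n} r"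
begin

lemma inj_syz: "inj_on (syz_pair r :: nat set set \<Rightarrow> (nat set, 'k::field) mpoly) (Pi_pairs n r)"
proof (rule inj_onI)
  fix p1 p2 assume p1: "p1 \<in> Pi_pairs n r" and p2: "p2 \<in> Pi_pairs n r"
    and eq: "(syz_pair r p1 :: (nat set, 'k) mpoly) = syz_pair r p2"
  obtain A B where AB: "p1 = {A, B}" "A \<in> conn_ideals n r" "B \<in> conn_ideals n r" "intersect_nontrivially A B"
    using p1 by (rule Pi_elim)
  obtain C D where CD: "p2 = {C, D}" "C \<in> conn_ideals n r" "D \<in> conn_ideals n r" "intersect_nontrivially C D"
    using p2 by (rule Pi_elim)
  have fin: "finite A" "finite B" "finite C" "finite D" using AB CD conn_finite[OF po] by auto
  have e: "(syz r A B :: (nat set, 'k) mpoly) = syz r C D" using eq AB(1) CD(1) by (simp add: syz_pair_eq)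
  have "lk (syz r C D :: (nat set, 'k) mpoly) (mon2 A B) = 1"
    unfolding e[symmetric] by (rule lk_syz_self[OF fin(1,2) AB(4)])
  then have "lk (syz r C D :: (nat set, 'k) mpoly) (mon2 A B) \<noteq> 0" by simp
  then have "{C, D} = {A, B}" by (rule coeff_syz[OF fin(3,4) CD(4) AB(4)])
  then show "p1 = p2" using AB(1) CD(1) by simp
qed

lemma minimal:
  assumes sub: "G' \<subset> (syz_pair r ` Pi_pairs n r :: (nat set, 'k::field) mpoly set)"
  shows "ideal_gen_S n r G' \<noteq> I_P n r"
proof
  assume IG: "ideal_gen_S n r G' = I_P n r"
  obtain g0 where g0: "g0 \<in> syz_pair r ` Pi_pairs n r" "g0 \<notin> G'" using sub by blast
  then obtain p0 where p0: "p0 \<in> Pi_pairs n r" "g0 = syz_pair r p0" by blast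
  obtain A B where AB: "p0 = {A, B}" "A \<in> conn_ideals n r" "B \<in> conn_ideals n r" "intersect_nontrivially A B"
    using p0(1) by (rule Pi_elim)
  have fA: "finite A" "finite B" using AB conn_finite[OF po] by auto
  have g0e: "g0 = syz r A B" using p0(2) AB(1) syz_pair_eq by simp
  have "g0 \<in> I_P n r" using g0(1) G_sub_IP[OF po] by blast
  then have "g0 \<in> ideal_gen_S n r G'" using IG by simp
  then obtain F c where Fc: "g0 = (\<Sum>g\<in>F. c g * g)" "finite F" "F \<subseteq> G'"
    unfolding ideal_gen_S_def by blast
  define M where "M = mon2 A B"
  have AneB: "A \<noteq> B" using AB(4) unfolding intersect_nontrivially_def by auto
  have M2: "total_deg M = 2" unfolding M_def by (rule total_deg_mon2[OF AneB])
  have "lk g0 M = (\<Sum>g\<in>F. lk (c g * g) M)" unfolding Fc(1) by (simp add: lookup_sum)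
  also have "\<dots> = 0"
  proof (rule sum.neutral, rule ballI)
    fix g assume gF: "g \<in> F"
    then have gG: "g \<in> syz_pair r ` Pi_pairs n r" using Fc(3) sub by blast
    then have gI: "g \<in> I_P n r" using G_sub_IP[OF po] by blast
    have degs: "\<forall>b\<in>ks g. 2 \<le> total_deg b" using deg2[OF po gI] by blast
    have "lk g M = 0"
    proof (rule ccontr)
      assume nz: "lk g M \<noteq> 0"
      obtain p where p: "p \<in> Pi_pairs n r" "g = syz_pair r p" using gG by blast
      obtain C D where CD: "p = {C, D}" "C \<in> conn_ideals n r" "D \<in> conn_ideals n r" "intersect_nontrivially C D"
        using p(1) by (rule Pi_elim)
      have fC: "finite C" "finite D" using CD conn_finite[OF po] by auto
      have "g = syz r C D" using p(2) CD(1) syz_pair_eq by simp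
      then have "{C, D} = {A, B}" using coeff_syz[OF fC CD(4) AB(4)] nz unfolding M_def by simp
      then have "g = g0" using p(2) CD(1) p0(2) AB(1) by simp
      then show False using gF Fc(3) g0(2) by blast
    qed
    then show "lk (c g * g) M = 0" using lk_mult_deg2[OF M2 degs] by simp
  qed
  finally have "lk g0 M = 0" .
  moreover have "lk g0 M = 1" unfolding g0e M_def by (rule lk_syz_self[OF fA AB(4)])
  ultimately show False by simp
qed

end

theorem theorem1p2:
  fixes n :: nat and r :: "nat rel"
  assumes "partial_order_on {1..n} r"
  shows "phi ` S_ring n r = (R_P n r :: (nat, 'k::field) mpoly set)
       \<and> (\<forall>p \<in> (I_P n r :: (nat set, 'k) mpoly set). \<forall>m \<in> Poly_Mapping.keys p. 2 \<le> total_deg m)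
       \<and> inj_on (syz_pair r :: nat set set \<Rightarrow> (nat set, 'k) mpoly) (Pi_pairs n r)
       \<and> minimal_gen_set n r (syz_pair r ` Pi_pairs n r) (I_P n r :: (nat set, 'k) mpoly set)"
proof (intro conjI)
  show "phi ` S_ring n r = (R_P n r :: (nat, 'k::field) mpoly set)" by (rule surj_phi[OF assms])
  show "\<forall>p \<in> (I_P n r :: (nat set, 'k) mpoly set). \<forall>m \<in> Poly_Mapping.keys p. 2 \<le> total_deg m"
    using deg2[OF assms] by blast
  show "inj_on (syz_pair r :: nat set set \<Rightarrow> (nat set, 'k) mpoly) (Pi_pairs n r)" by (rule inj_syz[OF assms])
  show "minimal_gen_set n r (syz_pair r ` Pi_pairs n r) (I_P n r :: (nat set, 'k) mpoly set)"
    unfolding minimal_gen_set_def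
  proof (intro conjI allI impI)
    show "(syz_pair r ` Pi_pairs n r :: (nat set, 'k) mpoly set) \<subseteq> I_P n r" by (rule G_sub_IP[OF assms])
    show "ideal_gen_S n r (syz_pair r ` Pi_pairs n r) = (I_P n r :: (nat set, 'k) mpoly set)"
      using IG_subset_IP[OF G_sub_IP[OF assms]] IP_sub_IG[OF assms] by blast
    fix G' assume "G' \<subset> (syz_pair r ` Pi_pairs n r :: (nat set, 'k) mpoly set)"
    then show "ideal_gen_S n r G' \<noteq> I_P n r" by (rule minimal[OF assms])
  qed
qed


end
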